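(* Let $m\ge1$, $0=c_1<c_2<\cdots<c_m$ be fixed, $\vec c=(c_1,\dots,c_m)$, and for $x\in\mathbb{R}$ put $t_k=c_k+x$ ($k=1,\dots,m$). Let $\omega_0,\dots,\omega_m$ be real with $\sum_{k=0}^\ell\omega_k\ge0$ for $\ell=0,\dots,m$, such that $w(s)={\rm e}^{-s^2}\big(\omega_0+\sum_{k=1}^m\omega_k\theta(s-t_k)\big)$ is not identically zero. Let $D_n(x;\vec c)=\det\big(\int_{\mathbb{R}}s^{i+j}w(s)ds\big)_{i,j=0}^{n-1}$ ($D_0:=1$), $\hat D_n(x;\vec c):={\rm e}^{nx^2}D_n(x;\vec c)$, and let $R_{n,k}(x;\vec c)$ be as in the context. Then for $n\ge1$: (i) $$\frac{d^2}{dx^2}\ln\hat D_n=4\frac{\hat D_{n+1}\hat D_{n-1}}{\hat D_n^2};$$ (ii) for each $k=1,\dots,m$, wherever $R_{n,k}\ne0$, $$\frac{d^2R_{n,k}}{dx^2}-\frac{1}{2R_{n,k}}\Big(\frac{dR_{n,k}}{dx}\Big)^2=R_{n,k}\Bigg[\frac32\Big(\sum_{j=1}^mR_{n,j}\Big)^2-2\sum_{j=1}^m(c_k+c_j+2x)R_{n,j}+2\big((c_k+x)^2-2n-1\big)\Bigg];$$ (iii) if $R_{n,k}(y;\vec c)\ne0$ for all $k$ and all $y$ between $0$ and $x$, then $$\frac{\hat D_n(x;\vec c)}{\hat D_n(0;\vec c)}={\rm e}^{nx^2}\exp\Bigg[\frac14\int_0^x\Bigg(-\sum_{k=1}^m\frac{(R_{n,k}')^2}{2R_{n,k}}+\frac12\Big(\sum_{k=1}^mR_{n,k}\Big)^3+\sum_{k=1}^m2(c_k+y)^2R_{n,k}-\Big(\sum_{k=1}^m2(c_k+y)R_{n,k}+4n\Big)\sum_{j=1}^mR_{n,j}\Bigg)dy\Bigg],$$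 where in the integrand $R_{n,k}=R_{n,k}(y;\vec c)$ and $'=d/dy$.
   Context: $\theta(y)=1$ for $y>0$ and $0$ otherwise. $P_n(z)$ is the monic degree-$n$ polynomial orthogonal w.r.t. $w$ on $\mathbb{R}$ (which depends on $x$ through the $t_k$), $\int P_jP_kw\,ds=h_k\delta_{jk}$, $h_k>0$. $R_{n,k}(x;\vec c):=\omega_k{\rm e}^{-t_k^2}P_n(t_k)^2/h_n$ with $t_k=c_k+x$. *)

theory Defs
  imports "HOL-Analysis.Analysis" "HOL-Computational_Algebra.Polynomial"
begin

definition theta :: "real \<Rightarrow> real" where
  "theta y = (if y > 0 then 1 else 0)"

definition weight :: "nat \<Rightarrow> (nat \<Rightarrow> real) \<Rightarrow> (nat \<Rightarrow> real) \<Rightarrow> real \<Rightarrow> real \<Rightarrow> real" where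
  "weight m c \<omega> x s = exp (- (s\<^sup>2)) * (\<omega> 0 + (\<Sum>k=1..m. \<omega> k * theta (s - (c k + x))))"

definition moment :: "nat \<Rightarrow> (nat \<Rightarrow> real) \<Rightarrow> (nat \<Rightarrow> real) \<Rightarrow> real \<Rightarrow> nat \<Rightarrow> real" where
  "moment m c \<omega> x j = (LINT s|lborel. s ^ j * weight m c \<omega> x s)"

text \<open>Determinant of the n x n Hankel matrix (a (i+j)), i,j < n, by the Leibniz formula
  (empty determinant = 1).\<close>
definition hankel_det :: "nat \<Rightarrow> (nat \<Rightarrow> real) \<Rightarrow> real" where
  "hankel_det n a = (\<Sum>p | p permutes {..<n}. of_int (sign p) * (\<Prod>i<n. a (i + p i)))"

definition Dn :: "nat \<Rightarrow> (nat \<Rightarrow> real) \<Rightarrow> (nat \<Rightarrow> real) \<Rightarrow> nat \<Rightarrow> real \<Rightarrow> real" where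
  "Dn m c \<omega> n x = hankel_det n (moment m c \<omega> x)"

definition Dhat :: "nat \<Rightarrow> (nat \<Rightarrow> real) \<Rightarrow> (nat \<Rightarrow> real) \<Rightarrow> nat \<Rightarrow> real \<Rightarrow> real" where
  "Dhat m c \<omega> n x = exp (real n * x\<^sup>2) * Dn m c \<omega> n x"

definition orth_poly :: "nat \<Rightarrow> (nat \<Rightarrow> real) \<Rightarrow> (nat \<Rightarrow> real) \<Rightarrow> real \<Rightarrow> nat \<Rightarrow> real poly" where
  "orth_poly m c \<omega> x n = (THE p. lead_coeff p = 1 \<and> degree p = n \<and>
     (\<forall>q :: real poly. degree q < n \<longrightarrow>
        (LINT s|lborel. poly p s * poly q s * weight m c \<omega> x s) = 0))"

definition hnorm :: "nat \<Rightarrow> (nat \<Rightarrow> real) \<Rightarrow> (nat \<Rightarrow> real) \<Rightarrow> real \<Rightarrow> nat \<Rightarrow> real" where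
  "hnorm m c \<omega> x n = (LINT s|lborel. (poly (orth_poly m c \<omega> x n) s)\<^sup>2 * weight m c \<omega> x s)"

definition Rnk :: "nat \<Rightarrow> (nat \<Rightarrow> real) \<Rightarrow> (nat \<Rightarrow> real) \<Rightarrow> nat \<Rightarrow> nat \<Rightarrow> real \<Rightarrow> real" where
  "Rnk m c \<omega> n k x = \<omega> k * exp (- ((c k + x)\<^sup>2)) * (poly (orth_poly m c \<omega> x n) (c k + x))\<^sup>2
      / hnorm m c \<omega> x n"

end

theory Submission
  imports Defs "HOL-Probability.Probability" "Jordan_Normal_Form.Determinant"
begin


definition gm :: "nat \<Rightarrow> real \<Rightarrow> real" where "gm j s = exp (- s\<^sup>2) * s ^ j"

definition Hh :: "nat \<Rightarrow> real" where
  "Hh j = (if even j then (sqrt pi / 2) * (fact j / (2 ^ j * fact (j div 2))) else fact (j div 2) / 2)"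

lemma gm_half: "has_bochner_integral lborel (\<lambda>s. indicator {0..} s *\<^sub>R gm j s) (Hh j)"
proof (cases "even j")
  case True
  then obtain k where k: "j = 2*k" by (auto elim: evenE)
  show ?thesis using gaussian_moment_even_pos[where k=k] unfolding gm_def Hh_def k by simp
next
  case False
  then obtain k where k: "j = 2*k+1" by (auto elim: oddE)
  have "(2*k+1) div 2 = k" by simp
  then show ?thesis using gaussian_moment_odd_pos[where k=k] unfolding gm_def Hh_def k by simp
qed

lemma gm_full: "has_bochner_integral lborel (gm j) (if even j then 2 * Hh j else 0)"
proof (cases "even j")
  case True
  have "has_bochner_integral lborel (gm j) (2 *\<^sub>R Hh j)"
    by (rule has_bochner_integral_even_function[OF gm_half]) (use True in \<open>simp add: gm_def\<close>)
  then show ?thesis using True by simp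
next
  case False
  have "has_bochner_integral lborel (gm j) 0"
    by (rule has_bochner_integral_odd_function[OF gm_half]) (use False in \<open>simp add: gm_def\<close>)
  then show ?thesis using False by simp
qed

lemma gm_integrable: "integrable lborel (gm j)"
  using gm_full has_bochner_integral_iff by blast

lemma Hh_alg:
  fixes F G P s :: real and k :: nat
  assumes "G > 0" "P > 0"
  shows "real (2*k+1) * (s / 2 * (F / (P * G))) - 2 * (s / 2 * ((2*real k+2) * (2*real k+1) * F / (4 * P * ((real k + 1) * G)))) = 0"
proof -
  have "(2*real k+2) * (2*real k+1) * F / (4 * P * ((real k + 1) * G)) = ((real k + 1) * ((2*real k+1) * F * 2)) / ((real k + 1) * (4 * P * G))"
    by (simp add: algebra_simps)
  also have "\<dots> = (2*real k+1) * F * 2 / (4 * P * G)"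
    by (rule mult_divide_mult_cancel_left) simp
  finally have e: "(2*real k+2) * (2*real k+1) * F / (4 * P * ((real k + 1) * G)) = (2*real k+1) * F * 2 / (4 * P * G)" .
  show ?thesis unfolding e using assms by (simp add: field_simps)
qed

lemma Hh_rel: "real j * Hh (j - 1) - 2 * Hh (Suc j) + (if j = 0 then 1 else 0) = 0"
proof -
  consider "j = 0" | k where "j = 2*k+1" | k where "j = 2*k+2"
  proof -
    assume a: "j = 0 \<Longrightarrow> thesis" and b: "\<And>k. j = 2*k+1 \<Longrightarrow> thesis" and c: "\<And>k. j = 2*k+2 \<Longrightarrow> thesis"
    show thesis
    proof (cases "even j")
      case True
      then obtain k where k: "j = 2*k" by (auto elim: evenE)
      show thesis
      proof (cases k)
        case 0 then show thesis using a k by simp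
      next
        case (Suc k') then show thesis using c[of k'] k by simp
      qed
    next
      case False
      then obtain k where "j = 2*k+1" by (auto elim: oddE)
      then show thesis using b by simp
    qed
  qed
  then show ?thesis
  proof cases
    case 1 then show ?thesis by (simp add: Hh_def)
  next
    case (2 k)
    have a: "(2 * k + 2) div 2 = Suc k" "Suc (2*k+1) = 2*k+2" "2*k+1-1 = 2*k" "(2*k) div 2 = k" by simp_all
    have b: "fact (2*k+2) = (2*real k+2) * (2*real k+1) * (fact (2*k) :: real)"
      by (simp add: algebra_simps)
    have d: "fact (Suc k) = (real k + 1) * (fact k :: real)" by simp
    have e: "(2::real) ^ (2*k+2) = 4 * 2^(2*k)" by (simp add: power_add)
    have pos: "(fact k :: real) > 0" "(2::real)^(2*k) > 0" by auto
    have "even (2*k)" "even (2*k+2)" by auto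
    then have "Hh (2*k) = sqrt pi / 2 * (fact (2*k) / (2^(2*k) * fact k))"
      "Hh (2*k+2) = sqrt pi / 2 * (fact (2*k+2) / (2^(2*k+2) * fact (Suc k)))"
      unfolding Hh_def by (simp_all add: a)
    moreover have "real (2*k+1) * (sqrt pi / 2 * (fact (2*k) / (2^(2*k) * fact k)))
      - 2 * (sqrt pi / 2 * (fact (2*k+2) / (2^(2*k+2) * fact (Suc k)))) = 0"
      unfolding b d e using pos by (rule Hh_alg)
    ultimately show ?thesis unfolding 2 by (simp add: a)
  next
    case (3 k)
    have h1: "Hh (2*k+2-1) = fact k / 2"
    proof -
      have "Hh (2*k+2-1) = Hh (2*k+1)" by simp
      also have "\<dots> = fact k / 2" by (simp add: Hh_def)
      finally show ?thesis .
    qed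
    have h2: "Hh (Suc (2*k+2)) = fact (Suc k) / 2"
    proof -
      have "Suc (2*k+2) = 2 * Suc k + 1" by simp
      then have "Hh (Suc (2*k+2)) = Hh (2 * Suc k + 1)" by simp
      also have "\<dots> = fact (Suc k) / 2" by (simp only: Hh_def) simp
      finally show ?thesis .
    qed
    show ?thesis unfolding 3 h1 h2 by (simp add: algebra_simps)
  qed
qed

definition Afull :: "nat \<Rightarrow> real" where "Afull j = integral\<^sup>L lborel (gm j)"

lemma Afull_rel: "real j * Afull (j - 1) = 2 * Afull (Suc j)"
proof -
  have A: "Afull i = (if even i then 2 * Hh i else 0)" for i
    using gm_full[of i] by (simp add: Afull_def has_bochner_integral_integral_eq)
  show ?thesis
  proof (cases "j = 0")
    case True then show ?thesis by (simp add: A)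
  next
    case False
    then have "j - 1 = j - 1" "Suc (j-1) = j" by auto
    show ?thesis using Hh_rel[of j] False by (auto simp: A)
  qed
qed

definition Tm :: "nat \<Rightarrow> real \<Rightarrow> real" where
  "Tm j t = (LINT s|lborel. indicator {t<..} s * gm j s)"

lemma Tm_integrable: "integrable lborel (\<lambda>s. indicator {t<..} s * gm j s)"
  using integrable_mult_indicator[OF _ gm_integrable, of "{t<..}" j] by simp

lemma gm_interval_integrable: "interval_lebesgue_integrable lborel a b (gm j)"
  unfolding interval_lebesgue_integrable_def set_integrable_def
  using integrable_mult_indicator[OF _ gm_integrable] by auto

lemma Tm_split: "Tm j t = Tm j 0 - (LBINT s=ereal 0..ereal t. gm j s)"
proof -
  have e: "Tm j u = (LBINT s=ereal u..\<infinity>. gm j s)" for u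
    by (simp add: Tm_def interval_integral_to_infinity_eq set_lebesgue_integral_def)
  have "(LBINT s=ereal t..ereal 0. gm j s) + (LBINT s=ereal 0..\<infinity>. gm j s) = (LBINT s=ereal t..\<infinity>. gm j s)"
    by (rule interval_integral_sum) (rule gm_interval_integrable)
  then show ?thesis unfolding e
    by (metis interval_integral_endpoints_reverse add.commute diff_conv_add_uminus)
qed

lemma gm_cont: "continuous_on S (gm j)"
  unfolding gm_def by (intro continuous_intros)

lemma Tm_deriv: "(Tm j has_real_derivative - gm j t) (at t)"
proof -
  let ?a = "min 0 t - 1" and ?b = "max 0 t + 1"
  have "((\<lambda>u. LBINT y=ereal 0..ereal u. gm j y) has_vector_derivative (gm j t)) (at t within {?a..?b})"
    by (rule interval_integral_FTC2) (auto intro: gm_cont)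
  then have "((\<lambda>u. LBINT y=ereal 0..ereal u. gm j y) has_vector_derivative (gm j t)) (at t within {?a<..<?b})"
    by (rule has_vector_derivative_within_subset) auto
  moreover have "at t within {?a<..<?b} = at t"
    by (rule at_within_interior) auto
  ultimately have d: "((\<lambda>u. LBINT y=ereal 0..ereal u. gm j y) has_real_derivative (gm j t)) (at t)"
    by (simp add: has_real_derivative_iff_has_vector_derivative)
  have "((\<lambda>u. Tm j 0 - (LBINT y=ereal 0..ereal u. gm j y)) has_real_derivative (0 - gm j t)) (at t)"
    by (intro derivative_intros d)
  then show ?thesis by (subst Tm_split[abs_def]) simp
qed

lemma gm_deriv: "(gm j has_real_derivative (real j * exp (- t\<^sup>2) * t^(j-1) - 2 * (exp (- t\<^sup>2) * t ^ Suc j))) (at t)"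
proof -
  have d1: "((\<lambda>t. exp (- t\<^sup>2)) has_real_derivative (exp (- t\<^sup>2) * (- (2 * t)))) (at t)"
  proof -
    have "((\<lambda>t. - t\<^sup>2) has_real_derivative (- (2 * t))) (at t)"
      using DERIV_minus[OF DERIV_pow[of 2 t]] by simp
    from DERIV_chain2[OF DERIV_exp this] show ?thesis by simp
  qed
  have "((\<lambda>t. exp (- t\<^sup>2) * t ^ j) has_real_derivative
       (exp (- t\<^sup>2) * (- (2 * t)) * t^j + exp (- t\<^sup>2) * (real j * t^(j-1)))) (at t)"
    using DERIV_mult[OF d1 DERIV_pow[of j t]] by (simp add: mult.commute)
  moreover have "exp (- t\<^sup>2) * (- (2 * t)) * t^j + exp (- t\<^sup>2) * (real j * t^(j-1))
       = real j * exp (- t\<^sup>2) * t^(j-1) - 2 * (exp (- t\<^sup>2) * t ^ Suc j)"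
    by (simp add: algebra_simps)
  ultimately show ?thesis unfolding gm_def[abs_def] by (simp only:)
qed

lemma Tm0: "Tm i 0 = Hh i"
proof -
  have "AE s in lborel. indicator {0<..} s * gm i s = indicator {0..} s *\<^sub>R gm i s"
    using AE_lborel_singleton[of 0] by eventually_elim (simp add: indicator_def)
  moreover have "(\<lambda>s. indicator {0<..} s * gm i s) \<in> borel_measurable lborel"
    using Tm_integrable by blast
  moreover have "(\<lambda>s. indicator {0..} s *\<^sub>R gm i s) \<in> borel_measurable lborel"
    using gm_half[of i] by (auto simp: has_bochner_integral_iff)
  ultimately have "Tm i 0 = (LINT s|lborel. indicator {0..} s *\<^sub>R gm i s)"
    unfolding Tm_def by (rule integral_cong_AE[rotated 2])
  then show ?thesis using gm_half[of i] by (simp add: has_bochner_integral_integral_eq)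
qed

lemma Tm_rel: "real j * Tm (j - 1) t = 2 * Tm (Suc j) t - gm j t"
proof -
  define G where "G t = real j * Tm (j - 1) t - 2 * Tm (Suc j) t + gm j t" for t
  have "(G has_real_derivative 0) (at t)" for t
  proof -
    have a: "((\<lambda>z. real j * Tm (j - 1) z) has_real_derivative real j * (- gm (j - 1) t)) (at t)"
      by (rule DERIV_cmult[OF Tm_deriv])
    have b: "((\<lambda>z. 2 * Tm (Suc j) z) has_real_derivative 2 * (- gm (Suc j) t)) (at t)"
      by (rule DERIV_cmult[OF Tm_deriv])
    have "(G has_real_derivative (real j * (- gm (j-1) t) - 2 * (- gm (Suc j) t) +
       (real j * exp (- t\<^sup>2) * t^(j-1) - 2 * (exp (- t\<^sup>2) * t ^ Suc j)))) (at t)"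
      unfolding G_def[abs_def] by (rule DERIV_add[OF DERIV_diff[OF a b] gm_deriv])
    moreover have "real j * (- gm (j-1) t) - 2 * (- gm (Suc j) t) +
       (real j * exp (- t\<^sup>2) * t^(j-1) - 2 * (exp (- t\<^sup>2) * t ^ Suc j)) = 0"
      by (simp add: gm_def)
    ultimately show ?thesis by simp
  qed
  then have "G t = G 0" by (intro DERIV_isconst_all) auto
  also have "G 0 = 0"
    unfolding G_def Tm0 using Hh_rel[of j] by (cases "j = 0") (auto simp: gm_def)
  finally show ?thesis unfolding G_def by simp
qed

lemma theta_ind: "theta (s - t) = indicator {t<..} s"
  by (simp add: theta_def indicator_def)

lemma weight_decomp: "s ^ j * weight m c \<omega> x s =
   \<omega> 0 * gm j s + (\<Sum>k=1..m. \<omega> k * (indicator {c k + x<..} s * gm j s))"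
proof -
  have "s ^ j * weight m c \<omega> x s = \<omega> 0 * gm j s + (\<Sum>k=1..m. s^j * exp (- s\<^sup>2) * (\<omega> k * theta (s - (c k + x))))"
    unfolding weight_def gm_def by (simp add: algebra_simps sum_distrib_left)
  also have "(\<Sum>k=1..m. s^j * exp (- s\<^sup>2) * (\<omega> k * theta (s - (c k + x)))) = (\<Sum>k=1..m. \<omega> k * (indicator {c k + x<..} s * gm j s))"
    by (rule sum.cong) (simp_all add: theta_def gm_def indicator_def)
  finally show ?thesis .
qed

lemma Tm_shift_integrable: "integrable lborel (\<lambda>s. \<omega> k * (indicator {c k + x<..} s * gm j s))"
  by (intro integrable_mult_right Tm_integrable)

lemma mom_integrable: "integrable lborel (\<lambda>s. s ^ j * weight m c \<omega> x s)"
  unfolding weight_decomp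
  by (intro Bochner_Integration.integrable_add integrable_mult_right gm_integrable Bochner_Integration.integrable_sum Tm_shift_integrable)

lemma moment_eq: "moment m c \<omega> x j = \<omega> 0 * Afull j + (\<Sum>k=1..m. \<omega> k * Tm j (c k + x))"
proof -
  have "moment m c \<omega> x j = (LINT s|lborel. \<omega> 0 * gm j s) + (LINT s|lborel. (\<Sum>k=1..m. \<omega> k * (indicator {c k + x<..} s * gm j s)))"
    unfolding moment_def weight_decomp
    by (intro Bochner_Integration.integral_add integrable_mult_right gm_integrable Bochner_Integration.integrable_sum Tm_shift_integrable)
  also have "(LINT s|lborel. (\<Sum>k=1..m. \<omega> k * (indicator {c k + x<..} s * gm j s))) = (\<Sum>k=1..m. (LINT s|lborel. \<omega> k * (indicator {c k + x<..} s * gm j s)))"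
    by (intro Bochner_Integration.integral_sum Tm_shift_integrable)
  finally show ?thesis unfolding Afull_def Tm_def by simp
qed

lemma Tm_shift_deriv: "((\<lambda>z. \<omega> k * Tm j (c k + z)) has_real_derivative - (\<omega> k * gm j (c k + x))) (at x)"
proof -
  have "((\<lambda>z. c k + z) has_real_derivative 1) (at x)"
    using DERIV_add[OF DERIV_const DERIV_ident, of "c k" x] by simp
  from DERIV_chain2[OF Tm_deriv this] 
  have "((\<lambda>z. Tm j (c k + z)) has_real_derivative (- gm j (c k + x)) * 1) (at x)" .
  from DERIV_cmult[OF this, of "\<omega> k"] show ?thesis by simp
qed

lemma moment_deriv: "((\<lambda>x. moment m c \<omega> x j) has_real_derivative
    - (\<Sum>k=1..m. \<omega> k * exp (- (c k + x)\<^sup>2) * (c k + x) ^ j)) (at x)"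
proof -
  have "((\<lambda>x. \<omega> 0 * Afull j + (\<Sum>k=1..m. \<omega> k * Tm j (c k + x))) has_real_derivative
      0 + (\<Sum>k=1..m. - (\<omega> k * gm j (c k + x)))) (at x)"
    by (rule DERIV_add[OF DERIV_const DERIV_sum]) (rule Tm_shift_deriv)
  then show ?thesis unfolding moment_eq[abs_def]
    by (simp add: gm_def sum_negf algebra_simps)
qed

lemma moment_ibp: "real j * moment m c \<omega> x (j - 1) =
   2 * moment m c \<omega> x (Suc j) - (\<Sum>k=1..m. \<omega> k * exp (- (c k + x)\<^sup>2) * (c k + x) ^ j)"
proof -
  have "real j * moment m c \<omega> x (j - 1) = \<omega> 0 * (real j * Afull (j - 1)) + (\<Sum>k=1..m. \<omega> k * (real j * Tm (j - 1) (c k + x)))"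
    unfolding moment_eq by (simp add: algebra_simps sum_distrib_left)
  also have "\<dots> = \<omega> 0 * (2 * Afull (Suc j)) + (\<Sum>k=1..m. \<omega> k * (2 * Tm (Suc j) (c k + x) - gm j (c k + x)))"
    unfolding Afull_rel Tm_rel ..
  also have "\<dots> = 2 * moment m c \<omega> x (Suc j) - (\<Sum>k=1..m. \<omega> k * gm j (c k + x))"
    unfolding moment_eq by (simp add: algebra_simps sum_distrib_left sum_subtractf)
  finally show ?thesis by (simp add: gm_def algebra_simps)
qed


lemma poly_sum_bound:
  fixes p :: "real poly"
  assumes "degree p \<le> N" shows "poly p x = (\<Sum>i\<le>N. coeff p i * x ^ i)"
proof -
  have "poly p x = (\<Sum>i\<le>degree p. coeff p i * x ^ i)" by (rule poly_altdef)
  also have "\<dots> = (\<Sum>i\<le>N. coeff p i * x ^ i)"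
    by (rule sum.mono_neutral_left) (use assms in \<open>auto simp: coeff_eq_0\<close>)
  finally show ?thesis .
qed

locale ws =
  fixes m :: nat and c \<omega> :: "nat \<Rightarrow> real"
begin

definition L :: "real \<Rightarrow> real poly \<Rightarrow> real" where
  "L x q = (LINT s|lborel. poly q s * weight m c \<omega> x s)"

definition bk :: "nat \<Rightarrow> real \<Rightarrow> real" where
  "bk k x = \<omega> k * exp (- (c k + x)\<^sup>2)"

abbreviation mu where "mu x i \<equiv> moment m c \<omega> x i"

lemma L_integrable_bound:
  assumes "degree q \<le> N"
  shows "integrable lborel (\<lambda>s. poly q s * weight m c \<omega> x s)"
    and "L x q = (\<Sum>i\<le>N. coeff q i * mu x i)"
proof -
  have e: "poly q s * weight m c \<omega> x s = (\<Sum>i\<le>N. coeff q i * (s ^ i * weight m c \<omega> x s))" for s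
    unfolding poly_sum_bound[OF assms] by (simp add: sum_distrib_right mult.assoc)
  show "integrable lborel (\<lambda>s. poly q s * weight m c \<omega> x s)"
    unfolding e by (intro Bochner_Integration.integrable_sum integrable_mult_right mom_integrable)
  show "L x q = (\<Sum>i\<le>N. coeff q i * mu x i)"
    unfolding L_def e moment_def
    by (subst Bochner_Integration.integral_sum) (auto intro!: integrable_mult_right mom_integrable)
qed

lemma L_integrable: "integrable lborel (\<lambda>s. poly q s * weight m c \<omega> x s)"
  using L_integrable_bound[of q "degree q"] by simp

lemma L_mom: "degree q \<le> N \<Longrightarrow> L x q = (\<Sum>i\<le>N. coeff q i * mu x i)"
  using L_integrable_bound by blast

lemma L_add: "L x (p + q) = L x p + L x q"
proof -
  let ?N = "degree p + degree q"
  have "degree (p + q) \<le> ?N" using degree_add_le[of p "degree p + degree q" q] by auto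
  then show ?thesis using L_mom[of p ?N] L_mom[of q ?N] L_mom[of "p+q" ?N]
    by (simp add: sum.distrib algebra_simps)
qed

lemma L_smult: "L x (Polynomial.smult a p) = a * L x p"
  using L_mom[of p "degree p"] L_mom[of "Polynomial.smult a p" "degree p"]
  by (simp add: sum_distrib_left algebra_simps)

lemma L_minus: "L x (- p) = - L x p"
  using L_smult[of x "-1" p] by simp

lemma L_diff: "L x (p - q) = L x p - L x q"
  using L_add[of x p "-q"] L_minus[of x q] by simp

lemma L_0[simp]: "L x 0 = 0"
  using L_smult[of x 0 0] by simp

lemma L_sum: "L x (\<Sum>i\<in>A. f i) = (\<Sum>i\<in>A. L x (f i))"
  by (induction A rule: infinite_finite_induct) (auto simp: L_add)

lemma L_ibp: "L x (pderiv q) = 2 * L x (pCons 0 q) - (\<Sum>k=1..m. bk k x * poly q (c k + x))"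
proof -
  let ?N = "degree q"
  have d1: "degree (pderiv q) \<le> ?N" by (simp add: degree_pderiv)
  have d2: "degree (pCons 0 q) \<le> Suc ?N" by (simp add: degree_pCons_le)
  have "L x (pderiv q) = (\<Sum>i\<le>?N. real (Suc i) * coeff q (Suc i) * mu x i)"
    using L_mom[OF d1] by (simp add: coeff_pderiv)
  also have "\<dots> = (\<Sum>j\<le>Suc ?N. coeff q j * (real j * mu x (j - 1)))"
    by (subst sum.atMost_Suc_shift) (simp add: algebra_simps)
  also have "\<dots> = (\<Sum>j\<le>?N. coeff q j * (real j * mu x (j - 1)))"
    by (simp add: coeff_eq_0)
  also have "\<dots> = (\<Sum>j\<le>?N. coeff q j * (2 * mu x (Suc j) - (\<Sum>k=1..m. \<omega> k * exp (- (c k + x)\<^sup>2) * (c k + x) ^ j)))"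
    by (intro sum.cong refl) (metis moment_ibp)
  also have "\<dots> = 2 * (\<Sum>j\<le>?N. coeff q j * mu x (Suc j)) - (\<Sum>k=1..m. bk k x * (\<Sum>j\<le>?N. coeff q j * (c k + x) ^ j))"
    by (simp add: algebra_simps sum_subtractf sum_distrib_left bk_def) (rule sum.swap)
  also have "(\<Sum>j\<le>?N. coeff q j * mu x (Suc j)) = L x (pCons 0 q)"
  proof -
    have "L x (pCons 0 q) = (\<Sum>i\<le>Suc ?N. coeff (pCons 0 q) i * mu x i)" using L_mom[OF d2] .
    also have "\<dots> = (\<Sum>j\<le>?N. coeff q j * mu x (Suc j))"
      by (subst sum.atMost_Suc_shift) simp
    finally show ?thesis by simp
  qed
  finally show ?thesis by (simp add: poly_altdef)
qed

end


locale wsp = ws +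
  assumes m1: "m \<ge> 1" and c1: "c 1 = 0"
    and cmono: "\<And>i j. 1 \<le> i \<Longrightarrow> i < j \<Longrightarrow> j \<le> m \<Longrightarrow> c i < c j"
    and om: "\<And>l. l \<le> m \<Longrightarrow> (\<Sum>k=0..l. \<omega> k) \<ge> 0"
    and nz: "\<And>x. \<exists>s. weight m c \<omega> x s \<noteq> 0"
begin

definition Sw :: "real \<Rightarrow> real \<Rightarrow> real" where
  "Sw x s = \<omega> 0 + (\<Sum>k=1..m. \<omega> k * theta (s - (c k + x)))"

lemma weight_Sw: "weight m c \<omega> x s = exp (- s\<^sup>2) * Sw x s"
  unfolding weight_def Sw_def ..

lemma Sw_nonneg: "Sw x s \<ge> 0"
proof -
  define A where "A = {k\<in>{1..m}. c k + x < s}"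
  define l where "l = (if A = {} then 0 else Max A)"
  have fA: "finite A" unfolding A_def by simp
  have lm: "l \<le> m" unfolding l_def A_def using fA A_def by (auto simp: Max_le_iff)
  have Al: "A = {1..l}"
  proof (cases "A = {}")
    case True then show ?thesis by (simp add: l_def)
  next
    case False
    then have lA: "l \<in> A" unfolding l_def using fA Max_in by auto
    show ?thesis
    proof
      show "A \<subseteq> {1..l}" using fA False unfolding l_def by (auto simp: A_def)
      show "{1..l} \<subseteq> A"
      proof
        fix k assume k: "k \<in> {1..l}"
        show "k \<in> A"
        proof (cases "k = l")
          case True then show ?thesis using lA by simp
        next
          case False
          then have "c k < c l" using k lA by (intro cmono) (auto simp: A_def)
          then show ?thesis using k lA by (auto simp: A_def)
        qed
      qed
    qed
  qed
  have "(\<Sum>k=1..m. \<omega> k * theta (s - (c k + x))) = (\<Sum>k=1..m. if c k + x < s then \<omega> k else 0)"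
    by (rule sum.cong) (auto simp: theta_def)
  also have "\<dots> = (\<Sum>k\<in>A. \<omega> k)" unfolding A_def by (rule sum.inter_filter[symmetric]) simp
  finally have eq: "(\<Sum>k=1..m. \<omega> k * theta (s - (c k + x))) = (\<Sum>k=1..l. \<omega> k)" unfolding Al .
  have "Sw x s = \<omega> 0 + (\<Sum>k=1..l. \<omega> k)" unfolding Sw_def eq ..
  also have "\<dots> = (\<Sum>k=0..l. \<omega> k)" by (simp add: sum.atLeast_Suc_atMost)
  finally show ?thesis using om[OF lm] by simp
qed

lemma weight_nonneg: "weight m c \<omega> x s \<ge> 0"
  unfolding weight_Sw using Sw_nonneg by simp

lemma weight_pos_interval: "\<exists>a b. a < b \<and> (\<forall>s\<in>{a<..<b}. weight m c \<omega> x s > 0)"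
proof -
  obtain s0 where s0: "weight m c \<omega> x s0 \<noteq> 0" using nz by blast
  then have S0: "Sw x s0 > 0" using Sw_nonneg[of x s0] unfolding weight_Sw by force
  define D where "D = (\<lambda>k. s0 - (c k + x)) ` {k\<in>{1..m}. c k + x < s0}"
  define \<delta> where "\<delta> = Min (insert 1 D)"
  have fD: "finite D" unfolding D_def by simp
  have dpos: "\<delta> > 0" unfolding \<delta>_def using fD by (auto simp: D_def)
  have dle: "\<And>k. k \<in> {1..m} \<Longrightarrow> c k + x < s0 \<Longrightarrow> \<delta> \<le> s0 - (c k + x)"
    unfolding \<delta>_def using fD by (intro Min_le) (auto simp: D_def)
  have "weight m c \<omega> x s > 0" if s: "s \<in> {s0 - \<delta><..<s0}" for s
  proof -
    have "theta (s - (c k + x)) = theta (s0 - (c k + x))" if k: "k \<in> {1..m}" for k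
    proof (cases "c k + x < s0")
      case True
      with dle[OF k True] s show ?thesis by (auto simp: theta_def)
    next
      case False
      with s show ?thesis by (auto simp: theta_def)
    qed
    then have "Sw x s = Sw x s0" unfolding Sw_def by (auto intro!: sum.cong)
    then show ?thesis unfolding weight_Sw using S0 by simp
  qed
  then show ?thesis using dpos by (intro exI[of _ "s0 - \<delta>"] exI[of _ s0]) auto
qed

lemma L_sq_nonneg: "L x (q * q) \<ge> 0"
  unfolding L_def by (intro Bochner_Integration.integral_nonneg) (simp add: weight_nonneg)

lemma L_pos:
  assumes q: "q \<noteq> 0"
  shows "L x (q * q) > 0"
proof (rule ccontr)
  assume "\<not> L x (q * q) > 0"
  then have "L x (q * q) = 0" using L_sq_nonneg[of x q] by simp
  then have A1: "AE s in lborel. poly (q * q) s * weight m c \<omega> x s = 0"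
    unfolding L_def using L_integrable[of "q*q" x]
    by (subst (asm) integral_nonneg_eq_0_iff_AE) (auto simp: weight_nonneg)
  have A2: "AE s in lborel. s \<notin> {s. poly q s = 0}"
    by (rule AE_not_in[OF finite_imp_null_set_lborel[OF poly_roots_finite[OF q]]])
  obtain a b where ab: "a < b" "\<forall>s\<in>{a<..<b}. weight m c \<omega> x s > 0"
    using weight_pos_interval by blast
  have "AE s in lborel. s \<notin> {a<..<b}" using A1 A2
  proof eventually_elim
    case (elim s)
    show ?case
    proof
      assume "s \<in> {a<..<b}"
      then have "weight m c \<omega> x s > 0" using ab by blast
      with elim show False by simp
    qed
  qed
  then have "emeasure lborel {a<..<b} = 0"
    by (subst (asm) AE_iff_measurable[of "{a<..<b}"]) auto
  then show False using ab by simp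
qed

end


definition dlt :: "real poly \<Rightarrow> nat \<Rightarrow> bool" where
  "dlt q n \<longleftrightarrow> (\<forall>i\<ge>n. coeff q i = 0)"

lemma dlt_add: "dlt p n \<Longrightarrow> dlt q n \<Longrightarrow> dlt (p + q) n" by (simp add: dlt_def)
lemma dlt_diff: "dlt p n \<Longrightarrow> dlt q n \<Longrightarrow> dlt (p - q) n" by (simp add: dlt_def)
lemma dlt_smult: "dlt p n \<Longrightarrow> dlt (Polynomial.smult a p) n" by (simp add: dlt_def)
lemma dlt_0[simp]: "dlt 0 n" by (simp add: dlt_def)
lemma dlt_mono: "dlt p n \<Longrightarrow> n \<le> n' \<Longrightarrow> dlt p n'" by (simp add: dlt_def)
lemma dlt_pCons: "dlt p n \<Longrightarrow> dlt (pCons 0 p) (Suc n)"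
  by (auto simp: dlt_def coeff_pCons split: nat.split)
lemma dlt_zero: "dlt p 0 \<longleftrightarrow> p = 0"
  by (simp add: dlt_def poly_eq_iff)
lemma dlt_degree:
  assumes "dlt p n" shows "p = 0 \<or> degree p < n"
proof (rule disjCI)
  assume "\<not> degree p < n"
  then have "coeff p (degree p) = 0" using assms by (simp add: dlt_def)
  then show "p = 0" by simp
qed
lemma degree_dlt: "degree p < n \<Longrightarrow> dlt p n"
  by (simp add: dlt_def coeff_eq_0)

lemma degree_eq_coeffs: "coeff p n \<noteq> 0 \<Longrightarrow> (\<forall>i>n. coeff p i = 0) \<Longrightarrow> degree p = n"
  by (meson antisym degree_le le_degree)

lemma pCons0_mult_left: "pCons 0 p * q = pCons 0 (p * q)" by simp
lemma pCons0_mult_right: "p * pCons 0 q = pCons 0 (p * q)" by simp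

context wsp
begin

fun OP :: "nat \<Rightarrow> real \<Rightarrow> real poly" where
  "OP 0 x = 1"
| "OP (Suc 0) x = pCons 0 1 - Polynomial.smult (L x (pCons 0 1 * 1) / L x (1 * 1)) 1"
| "OP (Suc (Suc n)) x = pCons 0 (OP (Suc n) x)
     - Polynomial.smult (L x (pCons 0 (OP (Suc n) x) * OP (Suc n) x) / L x (OP (Suc n) x * OP (Suc n) x)) (OP (Suc n) x)
     - Polynomial.smult (L x (OP (Suc n) x * OP (Suc n) x) / L x (OP n x * OP n x)) (OP n x)"

definition hn :: "nat \<Rightarrow> real \<Rightarrow> real" where "hn n x = L x (OP n x * OP n x)"
definition an :: "nat \<Rightarrow> real \<Rightarrow> real" where "an n x = L x (pCons 0 (OP n x) * OP n x) / hn n x"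
definition bn :: "nat \<Rightarrow> real \<Rightarrow> real" where "bn n x = (if n = 0 then 0 else hn n x / hn (n - 1) x)"
definition OPm :: "nat \<Rightarrow> real \<Rightarrow> real poly" where "OPm n x = (if n = 0 then 0 else OP (n - 1) x)"

lemma OP_rec: "OP (Suc n) x = pCons 0 (OP n x) - Polynomial.smult (an n x) (OP n x) - Polynomial.smult (bn n x) (OPm n x)"
  by (cases n) (simp_all add: an_def bn_def hn_def OPm_def)

lemma OP_coeffs: "coeff (OP n x) n = 1 \<and> (\<forall>i>n. coeff (OP n x) i = 0)"
proof (induction n rule: less_induct)
  case (less n)
  show ?case
  proof (cases n)
    case 0 then show ?thesis by simp
  next
    case (Suc k)
    have IH: "coeff (OP k x) k = 1" "\<forall>i>k. coeff (OP k x) i = 0" using less Suc by auto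
    have Pm: "\<forall>i\<ge>k. coeff (OPm k x) i = 0"
    proof (cases k)
      case 0 then show ?thesis by (simp add: OPm_def)
    next
      case (Suc j)
      then have "\<forall>i>j. coeff (OP j x) i = 0" using less \<open>n = Suc k\<close> by auto
      then show ?thesis using Suc by (simp add: OPm_def)
    qed
    show ?thesis unfolding Suc OP_rec using IH Pm by (auto simp: coeff_pCons split: nat.split)
  qed
qed

lemma OP_lead: "coeff (OP n x) n = 1" using OP_coeffs by blast
lemma OP_high: "i > n \<Longrightarrow> coeff (OP n x) i = 0" using OP_coeffs by blast
lemma OP_degree: "degree (OP n x) = n"
  by (rule degree_eq_coeffs) (simp_all add: OP_lead OP_high)
lemma OP_nz: "OP n x \<noteq> 0" using OP_lead[of n x] by auto
lemma hn_pos: "hn n x > 0" unfolding hn_def by (rule L_pos[OF OP_nz])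

lemma dlt_OP: "j < n \<Longrightarrow> dlt (OP j x) n"
  by (simp add: dlt_def OP_high)
lemma dlt_OPm: "j \<le> n \<Longrightarrow> dlt (OPm j x) n"
  by (auto simp: dlt_def OPm_def OP_high)

lemma L_comm: "L x (p * q) = L x (q * p)" by (simp add: mult.commute)

lemma L_mult_add: "L x (p * (q + r)) = L x (p * q) + L x (p * r)"
  by (simp add: distrib_left L_add)
lemma L_mult_diff: "L x (p * (q - r)) = L x (p * q) - L x (p * r)"
  by (simp add: right_diff_distrib L_diff)
lemma L_mult_smult: "L x (p * Polynomial.smult a q) = a * L x (p * q)"
  by (simp add: L_smult)

lemma decomp:
  assumes "dlt q (Suc k)"
  shows "dlt (q - Polynomial.smult (coeff q k) (OP k x)) k"
  unfolding dlt_def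
proof (intro allI impI)
  fix i assume i: "k \<le> i"
  show "coeff (q - Polynomial.smult (coeff q k) (OP k x)) i = 0"
  proof (cases "i = k")
    case True then show ?thesis by (simp add: OP_lead)
  next
    case False
    then have "i \<ge> Suc k" "i > k" using i by auto
    then show ?thesis using assms by (simp add: dlt_def OP_high)
  qed
qed

lemma orth: "dlt q n \<Longrightarrow> L x (OP n x * q) = 0"
proof (induction n arbitrary: q rule: less_induct)
  case (less n)
  show ?case
  proof (cases n)
    case 0 then show ?thesis using less.prems by (simp add: dlt_zero)
  next
    case (Suc k)
    let ?P = "OP k x"
    define d where "d = coeff q k"
    define r where "r = q - Polynomial.smult d ?P"
    have rk: "dlt r k" unfolding r_def d_def by (rule decomp) (use less.prems Suc in simp)
    have qeq: "q = Polynomial.smult d ?P + r" unfolding r_def by simp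
    have IHk: "\<And>q. dlt q k \<Longrightarrow> L x (?P * q) = 0" using less.IH Suc by simp
    have PmP: "L x (OPm k x * ?P) = 0"
      using IHk[OF dlt_OPm[of k k]] by (simp add: L_comm)
    have part1: "L x (OP (Suc k) x * ?P) = 0"
    proof -
      have "L x (OP (Suc k) x * ?P) = L x (pCons 0 ?P * ?P) - an k x * hn k x - bn k x * L x (OPm k x * ?P)"
        unfolding OP_rec by (simp add: ring_distribs L_diff L_smult hn_def)
      also have "\<dots> = 0" using PmP hn_pos[of k x] by (simp add: an_def)
      finally show ?thesis .
    qed
    have part2: "L x (OP (Suc k) x * r) = 0"
    proof (cases k)
      case 0
      then have "r = 0" using rk by (simp add: dlt_zero)
      then show ?thesis by simp
    next
      case (Suc j)
      let ?Q = "OP j x"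
      define e where "e = coeff r j"
      define r' where "r' = r - Polynomial.smult e ?Q"
      have rj: "dlt r' j" unfolding r'_def e_def by (rule decomp) (use rk Suc in simp)
      have req: "r = Polynomial.smult e ?Q + r'" unfolding r'_def by simp
      have IHj: "\<And>q. dlt q j \<Longrightarrow> L x (?Q * q) = 0" using less.IH \<open>n = Suc k\<close> Suc by simp
      have Pr: "L x (?P * r) = 0" using IHk[OF rk] .
      have sQ: "pCons 0 ?Q = OP k x + Polynomial.smult (an j x) ?Q + Polynomial.smult (bn j x) (OPm j x)"
        using OP_rec[of j x] Suc by simp
      have a1: "L x (?P * pCons 0 ?Q) = hn k x"
      proof -
        have "L x (?P * pCons 0 ?Q) = hn k x + an j x * L x (?P * ?Q) + bn j x * L x (?P * OPm j x)"
          unfolding sQ by (simp add: ring_distribs L_add L_smult hn_def)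
        moreover have "L x (?P * ?Q) = 0" by (rule IHk) (rule dlt_OP, simp add: Suc)
        moreover have "L x (?P * OPm j x) = 0" by (rule IHk) (rule dlt_OPm, simp add: Suc)
        ultimately show ?thesis by simp
      qed
      have a2: "L x (?P * pCons 0 r') = 0"
        by (rule IHk) (use dlt_pCons[OF rj] Suc in simp)
      have a3: "L x (OPm k x * r) = e * hn j x"
      proof -
        have "OPm k x = ?Q" using Suc by (simp add: OPm_def)
        moreover have "L x (?Q * r) = e * hn j x + L x (?Q * r')"
          unfolding req by (simp add: ring_distribs L_add L_smult hn_def)
        moreover have "L x (?Q * r') = 0" by (rule IHj[OF rj])
        ultimately show ?thesis by simp
      qed
      have "L x (OP (Suc k) x * r) = L x (?P * pCons 0 r) - an k x * L x (?P * r) - bn k x * L x (OPm k x * r)"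
        unfolding OP_rec by (simp add: ring_distribs L_diff L_smult mult.commute)
      also have "L x (?P * pCons 0 r) = e * hn k x"
      proof -
        have "?P * pCons 0 r = Polynomial.smult e (?P * pCons 0 ?Q) + ?P * pCons 0 r'" unfolding req by (simp add: ring_distribs)
        then have "L x (?P * pCons 0 r) = e * L x (?P * pCons 0 ?Q) + L x (?P * pCons 0 r')"
          by (simp only: L_add L_smult)
        then show ?thesis using a1 a2 by simp
      qed
      finally show ?thesis using Pr a3 hn_pos[of j x] Suc by (simp add: bn_def)
    qed
    show ?thesis unfolding Suc qeq using part1 part2 by (simp add: ring_distribs L_add L_smult)
  qed
qed

end


context wsp
begin

lemma L_poly_mult: "(LINT s|lborel. poly p s * poly q s * weight m c \<omega> x s) = L x (p * q)"
  unfolding L_def by simp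

lemma orth_poly_eq: "orth_poly m c \<omega> x n = OP n x"
  unfolding orth_poly_def
proof (rule the_equality)
  show "lead_coeff (OP n x) = 1 \<and> degree (OP n x) = n \<and>
    (\<forall>q. degree q < n \<longrightarrow> (LINT s|lborel. poly (OP n x) s * poly q s * weight m c \<omega> x s) = 0)"
    by (auto simp: OP_degree OP_lead L_poly_mult intro!: orth degree_dlt)
next
  fix p assume p: "lead_coeff p = 1 \<and> degree p = n \<and>
    (\<forall>q. degree q < n \<longrightarrow> (LINT s|lborel. poly p s * poly q s * weight m c \<omega> x s) = 0)"
  define d where "d = p - OP n x"
  have "dlt d n" unfolding dlt_def d_def
  proof (intro allI impI)
    fix i assume "n \<le> i"
    then consider "i = n" | "i > n" by linarith
    then show "coeff (p - OP n x) i = 0"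
      by cases (use p in \<open>auto simp: OP_lead OP_high coeff_eq_0\<close>)
  qed
  then have "d = 0 \<or> degree d < n" by (rule dlt_degree)
  show "p = OP n x"
  proof (rule ccontr)
    assume "p \<noteq> OP n x"
    then have dz: "d \<noteq> 0" by (simp add: d_def)
    with \<open>d = 0 \<or> degree d < n\<close> have dd: "degree d < n" by simp
    have "L x (p * d) = 0" using p dd by (simp add: L_poly_mult)
    moreover have "L x (OP n x * d) = 0" by (rule orth[OF \<open>dlt d n\<close>])
    moreover have "L x (d * d) = L x ((p - OP n x) * d)" by (simp add: d_def)
    moreover have "L x ((p - OP n x) * d) = L x (p * d) - L x (OP n x * d)"
      by (simp only: left_diff_distrib L_diff)
    ultimately have "L x (d * d) = 0" by simp
    with L_pos[OF dz, of x] show False by simp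
  qed
qed

lemma hnorm_eq: "hnorm m c \<omega> x n = hn n x"
  unfolding hnorm_def hn_def L_def orth_poly_eq by (simp add: power2_eq_square)

lemma Rnk_eq: "Rnk m c \<omega> n k x = bk k x * (poly (OP n x) (c k + x))\<^sup>2 / hn n x"
  unfolding Rnk_def bk_def hnorm_eq orth_poly_eq ..

lemma L_bilin:
  assumes "degree p < n" "degree q < n"
  shows "L x (p * q) = (\<Sum>a<n. \<Sum>b<n. coeff p a * coeff q b * mu x (a + b))"
proof -
  have pp: "poly p s = (\<Sum>a<n. coeff p a * s ^ a)" for s
    using poly_sum_bound[of p "n - 1" s] assms by (simp add: lessThan_Suc_atMost[symmetric])
  have pq: "poly q s = (\<Sum>b<n. coeff q b * s ^ b)" for s
    using poly_sum_bound[of q "n - 1" s] assms by (simp add: lessThan_Suc_atMost[symmetric])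
  have e: "poly (p * q) s * weight m c \<omega> x s = (\<Sum>a<n. \<Sum>b<n. coeff p a * coeff q b * (s ^ (a + b) * weight m c \<omega> x s))" for s
    unfolding poly_mult pp pq sum_product sum_distrib_right by (intro sum.cong refl) (simp add: power_add algebra_simps sum_distrib_left)
  show ?thesis unfolding L_def e moment_def
    by (simp add: Bochner_Integration.integral_sum mom_integrable integrable_mult_right)
qed

lemma Dn_prod: "Dn m c \<omega> n x = (\<Prod>j<n. hn j x)"
proof -
  define M where "M = Matrix.mat n n (\<lambda>(i,j). mu x (i+j))"
  define A where "A = Matrix.mat n n (\<lambda>(i,j). coeff (OP i x) j)"
  have cM: "M \<in> carrier_mat n n" and cA: "A \<in> carrier_mat n n" and cAt: "transpose_mat A \<in> carrier_mat n n"
    unfolding M_def A_def by auto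
  have "Dn m c \<omega> n x = Determinant.det M"
    unfolding Dn_def hankel_det_def M_def det_def'[OF mat_carrier]
    by (simp add: atLeast0LessThan)
  have detA: "Determinant.det A = 1"
  proof -
    have "Determinant.det A = prod_list (diag_mat A)"
      by (rule det_lower_triangular[OF _ cA]) (simp add: A_def OP_high)
    also have "\<dots> = 1" unfolding prod_list_diag_prod using cA by (simp add: A_def OP_lead)
    finally show ?thesis .
  qed
  have prodM: "A * M * transpose_mat A = Matrix.mat n n (\<lambda>(i,j). L x (OP i x * OP j x))"
  proof (rule eq_matI)
    fix i j assume ij: "i < dim_row (Matrix.mat n n (\<lambda>(i,j). L x (OP i x * OP j x)))"
      "j < dim_col (Matrix.mat n n (\<lambda>(i,j). L x (OP i x * OP j x)))"
    then have i: "i < n" and j: "j < n" by auto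
    have "(A * M * transpose_mat A) $$ (i,j) = (\<Sum>b<n. (\<Sum>a<n. coeff (OP i x) a * mu x (a + b)) * coeff (OP j x) b)"
      using i j cA cM by (simp add: A_def M_def scalar_prod_def atLeast0LessThan)
    also have "\<dots> = (\<Sum>b<n. \<Sum>a<n. coeff (OP i x) a * coeff (OP j x) b * mu x (a + b))"
      by (simp add: sum_distrib_right sum_distrib_left mult_ac)
    also have "\<dots> = (\<Sum>a<n. \<Sum>b<n. coeff (OP i x) a * coeff (OP j x) b * mu x (a + b))"
      by (rule sum.swap)
    also have "\<dots> = L x (OP i x * OP j x)"
      by (rule L_bilin[symmetric]) (simp_all add: OP_degree i j)
    finally show "(A * M * transpose_mat A) $$ (i,j) = Matrix.mat n n (\<lambda>(i,j). L x (OP i x * OP j x)) $$ (i,j)"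
      using i j by simp
  qed (simp_all add: A_def)
  have "Determinant.det (A * M * transpose_mat A) = Determinant.det M"
    using det_mult[OF mult_carrier_mat[OF cA cM] cAt] det_mult[OF cA cM] det_transpose[OF cA] detA by simp
  moreover have "Determinant.det (Matrix.mat n n (\<lambda>(i,j). L x (OP i x * OP j x))) = (\<Prod>j<n. hn j x)"
  proof -
    have "Determinant.det (Matrix.mat n n (\<lambda>(i,j). L x (OP i x * OP j x))) =
        prod_list (diag_mat (Matrix.mat n n (\<lambda>(i,j). L x (OP i x * OP j x))))"
    proof (rule det_lower_triangular[OF _ mat_carrier])
      fix i j assume "i < j" "j < n"
      then show "Matrix.mat n n (\<lambda>(i,j). L x (OP i x * OP j x)) $$ (i,j) = 0"
        using orth[OF dlt_OP[of i j], of x] by (simp add: L_comm)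
    qed
    also have "\<dots> = (\<Prod>j<n. hn j x)"
      unfolding prod_list_diag_prod by (simp add: hn_def atLeast0LessThan)
    finally show ?thesis .
  qed
  ultimately show ?thesis using \<open>Dn m c \<omega> n x = Determinant.det M\<close> prodM by simp
qed

lemma Dn_pos: "Dn m c \<omega> n x > 0"
  unfolding Dn_prod by (rule prod_pos) (simp add: hn_pos)

end


context wsp
begin

definition ppn :: "nat \<Rightarrow> real \<Rightarrow> real" where
  "ppn n x = (if n = 0 then 0 else coeff (OP n x) (n - 1))"

lemma ppn_rec: "ppn (Suc n) x = ppn n x - an n x"
proof -
  have z: "coeff (OPm n x) n = 0" by (auto simp: OPm_def OP_high)
  have "coeff (OP (Suc n) x) n = coeff (pCons 0 (OP n x)) n - an n x * coeff (OP n x) n - bn n x * coeff (OPm n x) n"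
    by (subst OP_rec) simp
  then have e: "coeff (OP (Suc n) x) n = coeff (pCons 0 (OP n x)) n - an n x"
    using z by (simp add: OP_lead)
  show ?thesis
  proof (cases n)
    case 0 then show ?thesis using e by (simp add: ppn_def)
  next
    case (Suc j) then show ?thesis using e by (simp add: ppn_def)
  qed
qed

lemma orth_lt: "j < n \<Longrightarrow> L x (OP n x * OP j x) = 0"
  by (rule orth[OF dlt_OP])

lemma orth_lt': "j < n \<Longrightarrow> L x (OP j x * OP n x) = 0"
  using orth_lt by (simp add: L_comm)

lemma sOP: "pCons 0 (OP n x) = OP (Suc n) x + Polynomial.smult (an n x) (OP n x) + Polynomial.smult (bn n x) (OPm n x)"
  by (simp add: OP_rec)

lemma L_sP_prev: "n \<ge> 1 \<Longrightarrow> L x (OP n x * pCons 0 (OP (n - 1) x)) = hn n x"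
proof -
  assume n: "n \<ge> 1"
  have e: "pCons 0 (OP (n-1) x) = OP n x + Polynomial.smult (an (n-1) x) (OP (n-1) x) + Polynomial.smult (bn (n-1) x) (OPm (n-1) x)"
    using sOP[of "n-1" x] n by simp
  have "L x (OP n x * OPm (n-1) x) = 0" by (rule orth) (rule dlt_OPm, simp)
  moreover have "L x (OP n x * OP (n-1) x) = 0" using orth_lt[of "n-1" n x] n by simp
  ultimately show ?thesis unfolding e by (simp add: ring_distribs L_add L_smult hn_def)
qed

lemma poly_rec: "t * poly (OP n x) t = poly (OP (Suc n) x) t + an n x * poly (OP n x) t + bn n x * poly (OPm n x) t"
  using arg_cong[OF sOP[of n x], of "\<lambda>p. poly p t"] by simp

lemma dlt_pderiv_OP: "dlt (pderiv (OP n x)) n"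
  by (simp add: dlt_def coeff_pderiv OP_high)

definition tk :: "nat \<Rightarrow> real \<Rightarrow> real" where "tk k x = c k + x"

lemma ibp_sq: "(\<Sum>k=1..m. bk k x * (poly (OP n x) (tk k x))\<^sup>2) = 2 * an n x * hn n x"
proof -
  let ?P = "OP n x"
  have "L x (pderiv (?P * ?P)) = 2 * L x (pCons 0 (?P * ?P)) - (\<Sum>k=1..m. bk k x * poly (?P * ?P) (c k + x))"
    by (rule L_ibp)
  moreover have "L x (pderiv (?P * ?P)) = 0"
  proof -
    have "L x (?P * pderiv ?P) = 0"
      by (rule orth[OF dlt_pderiv_OP])
    moreover have "pderiv (?P * ?P) = ?P * pderiv ?P + pderiv ?P * ?P" by (simp add: pderiv_mult mult.commute)
    moreover have "L x (pderiv ?P * ?P) = L x (?P * pderiv ?P)" by (rule L_comm)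
    ultimately show ?thesis by (simp only: L_add)
  qed
  moreover have "L x (pCons 0 (?P * ?P)) = an n x * hn n x"
    using hn_pos[of n x] by (simp add: an_def)
  ultimately show ?thesis by (simp add: tk_def power2_eq_square)
qed

lemma ibp_cross:
  assumes n: "n \<ge> 1"
  shows "(\<Sum>k=1..m. bk k x * poly (OP n x) (tk k x) * poly (OP (n-1) x) (tk k x)) = 2 * hn n x - real n * hn (n-1) x"
proof -
  let ?P = "OP n x" and ?Q = "OP (n-1) x"
  have ib: "L x (pderiv (?P * ?Q)) = 2 * L x (pCons 0 (?P * ?Q)) - (\<Sum>k=1..m. bk k x * poly (?P * ?Q) (c k + x))"
    by (rule L_ibp)
  have d1: "L x (?P * pderiv ?Q) = 0"
    by (rule orth, rule dlt_mono[OF dlt_pderiv_OP]) simp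
  define r where "r = pderiv ?P - Polynomial.smult (real n) ?Q"
  have rd: "dlt r (n - 1)" unfolding dlt_def r_def
  proof (intro allI impI)
    fix i assume i: "n - 1 \<le> i"
    show "coeff (pderiv ?P - Polynomial.smult (real n) ?Q) i = 0"
    proof (cases "i = n - 1")
      case True then show ?thesis using n by (simp add: coeff_pderiv OP_lead)
    next
      case False then show ?thesis using n i by (simp add: coeff_pderiv OP_high)
    qed
  qed
  have d2: "L x (pderiv ?P * ?Q) = real n * hn (n-1) x"
  proof -
    have "pderiv ?P = Polynomial.smult (real n) ?Q + r" unfolding r_def by simp
    then have "L x (pderiv ?P * ?Q) = real n * hn (n-1) x + L x (?Q * r)"
      by (simp add: ring_distribs L_add L_smult hn_def L_comm)
    moreover have "L x (?Q * r) = 0" by (rule orth[OF rd])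
    ultimately show ?thesis by simp
  qed
  have d3: "L x (pCons 0 (?P * ?Q)) = hn n x"
    using L_sP_prev[OF n, of x] by simp
  have "pderiv (?P * ?Q) = pderiv ?P * ?Q + ?P * pderiv ?Q" by (simp add: pderiv_mult)
  then have "L x (pderiv (?P * ?Q)) = real n * hn (n-1) x" using d1 d2 by (simp only: L_add)
  with ib d3 show ?thesis
    by (simp add: tk_def mult.assoc)
qed

lemma coeff_sderiv: "coeff (pCons 0 (pderiv p)) i = real i * coeff p i"
  by (cases i) (simp_all add: coeff_pderiv)

lemma ibp_tcross:
  assumes n: "n \<ge> 1"
  shows "(\<Sum>k=1..m. bk k x * tk k x * poly (OP n x) (tk k x) * poly (OP (n-1) x) (tk k x))
     = ppn n x * hn (n-1) x + 2 * hn n x * (an n x + an (n-1) x)"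
proof -
  let ?P = "OP n x" and ?Q = "OP (n-1) x"
  let ?q = "pCons 0 (?P * ?Q)"
  have ib: "L x (pderiv ?q) = 2 * L x (pCons 0 ?q) - (\<Sum>k=1..m. bk k x * poly ?q (c k + x))"
    by (rule L_ibp)
  have pd: "pderiv ?q = ?P * ?Q + pCons 0 (pderiv ?P) * ?Q + ?P * pCons 0 (pderiv ?Q)"
    by (simp add: pderiv_pCons pderiv_mult algebra_simps)
  have e1: "L x (?P * ?Q) = 0" using orth_lt[of "n-1" n x] n by simp
  have e2: "L x (?P * pCons 0 (pderiv ?Q)) = 0"
    by (rule orth) (use dlt_pCons[OF dlt_pderiv_OP[of "n-1" x]] n in simp)
  define r where "r = pCons 0 (pderiv ?P) - Polynomial.smult (real n) ?P + Polynomial.smult (ppn n x) ?Q"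
  have rd: "dlt r (n - 1)" unfolding dlt_def r_def
  proof (intro allI impI)
    fix i assume i: "n - 1 \<le> i"
    consider "i = n - 1" | "i = n" | "i > n" using i by linarith
    then show "coeff (pCons 0 (pderiv ?P) - Polynomial.smult (real n) ?P + Polynomial.smult (ppn n x) ?Q) i = 0"
    proof cases
      case 1 then show ?thesis using n by (simp add: coeff_sderiv OP_lead ppn_def algebra_simps of_nat_diff)
    next
      case 2 then show ?thesis using n by (simp add: coeff_sderiv OP_lead OP_high)
    next
      case 3 then show ?thesis using n by (simp add: coeff_sderiv OP_high)
    qed
  qed
  have e3: "L x (pCons 0 (pderiv ?P) * ?Q) = - ppn n x * hn (n-1) x"
  proof -
    have "pCons 0 (pderiv ?P) = Polynomial.smult (real n) ?P - Polynomial.smult (ppn n x) ?Q + r" unfolding r_def by simp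
    then have "L x (pCons 0 (pderiv ?P) * ?Q) = real n * L x (?P * ?Q) - ppn n x * hn (n-1) x + L x (?Q * r)"
      by (simp add: ring_distribs L_add L_diff L_smult hn_def L_comm)
    moreover have "L x (?Q * r) = 0" by (rule orth[OF rd])
    ultimately show ?thesis using e1 by simp
  qed
  have e4: "L x (pCons 0 ?q) = hn n x * (an n x + an (n-1) x)"
  proof -
    have sq: "pCons 0 ?Q = ?P + Polynomial.smult (an (n-1) x) ?Q + Polynomial.smult (bn (n-1) x) (OPm (n-1) x)"
      using sOP[of "n-1" x] n by simp
    have "pCons 0 ?q = pCons 0 ?P * pCons 0 ?Q" by simp
    also have "\<dots> = pCons 0 ?P * (?P + Polynomial.smult (an (n-1) x) ?Q + Polynomial.smult (bn (n-1) x) (OPm (n-1) x))"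
      using sq by (simp only:)
    also have "\<dots> = pCons 0 ?P * ?P + Polynomial.smult (an (n-1) x) (pCons 0 ?P * ?Q) + Polynomial.smult (bn (n-1) x) (pCons 0 ?P * OPm (n-1) x)"
      by (simp only: distrib_left mult_smult_right)
    finally have "L x (pCons 0 ?q) = L x (pCons 0 ?P * ?P) + an (n-1) x * L x (pCons 0 ?P * ?Q)
        + bn (n-1) x * L x (pCons 0 ?P * OPm (n-1) x)"
      by (simp only: L_add L_smult)
    moreover have "L x (pCons 0 ?P * ?P) = an n x * hn n x" using hn_pos[of n x] by (simp add: an_def)
    moreover have "L x (pCons 0 ?P * ?Q) = hn n x" using L_sP_prev[OF n, of x] by (simp add: L_comm)
    moreover have "L x (pCons 0 ?P * OPm (n-1) x) = 0"
    proof -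
      have "L x (?P * pCons 0 (OPm (n-1) x)) = 0"
        by (rule orth) (use dlt_pCons[OF dlt_OPm[of "n-1" "n-1" x]] n in simp)
      then show ?thesis by simp
    qed
    ultimately show ?thesis by (simp add: algebra_simps)
  qed
  have "L x (pderiv ?q) = - ppn n x * hn (n-1) x"
    unfolding pd using e1 e2 e3 by (simp add: L_add)
  with ib e4 show ?thesis by (simp add: tk_def algebra_simps)
qed

end


definition sm :: "(real \<Rightarrow> real poly) \<Rightarrow> bool" where
  "sm F \<longleftrightarrow> (\<exists>N. \<forall>y. degree (F y) \<le> N) \<and> (\<forall>i x. (\<lambda>y. coeff (F y) i) differentiable (at x))"

definition pdx :: "(real \<Rightarrow> real poly) \<Rightarrow> real \<Rightarrow> real poly" where
  "pdx F x = (\<Sum>i\<le>(SOME N. \<forall>y. degree (F y) \<le> N). Polynomial.monom (deriv (\<lambda>y. coeff (F y) i) x) i)"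

lemma sm_bound: "sm F \<Longrightarrow> \<forall>y. degree (F y) \<le> (SOME N. \<forall>y. degree (F y) \<le> N)"
proof -
  assume "sm F"
  then have "\<exists>N. \<forall>y. degree (F y) \<le> N" by (simp add: sm_def)
  then show ?thesis by (rule someI_ex)
qed

lemma sm_coeff_deriv: "sm F \<Longrightarrow> ((\<lambda>y. coeff (F y) i) has_real_derivative deriv (\<lambda>y. coeff (F y) i) x) (at x)"
  unfolding sm_def using DERIV_deriv_iff_real_differentiable by blast

lemma coeff_pdx:
  assumes "sm F"
  shows "coeff (pdx F x) i = deriv (\<lambda>y. coeff (F y) i) x"
proof -
  define N where "N = (SOME N. \<forall>y. degree (F y) \<le> N)"
  have b: "\<forall>y. degree (F y) \<le> N" using sm_bound[OF assms] unfolding N_def .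
  show ?thesis
  proof (cases "i \<le> N")
    case True
    then show ?thesis unfolding pdx_def N_def[symmetric] coeff_sum
      by (simp add: sum.delta)
  next
    case False
    have "(\<lambda>y. coeff (F y) i) = (\<lambda>y. 0)"
    proof (rule ext)
      fix y show "coeff (F y) i = 0" using b[rule_format, of y] False by (intro coeff_eq_0) linarith
    qed
    then have "deriv (\<lambda>y. coeff (F y) i) x = 0" by (simp add: DERIV_imp_deriv)
    moreover have "coeff (pdx F x) i = 0" unfolding pdx_def N_def[symmetric] coeff_sum
      using False by simp
    ultimately show ?thesis by simp
  qed
qed

lemma sm_coeff_has_deriv: "sm F \<Longrightarrow> ((\<lambda>y. coeff (F y) i) has_real_derivative coeff (pdx F x) i) (at x)"
  using sm_coeff_deriv coeff_pdx by metis

lemma degree_pdx: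
  assumes "sm F" "\<forall>y. degree (F y) \<le> N"
  shows "degree (pdx F x) \<le> N"
proof (rule degree_le, intro allI impI)
  fix i assume "N < i"
  have "(\<lambda>y. coeff (F y) i) = (\<lambda>y. 0)"
  proof (rule ext)
    fix y show "coeff (F y) i = 0" using assms(2)[rule_format, of y] \<open>N < i\<close> by (intro coeff_eq_0) linarith
  qed
  then show "coeff (pdx F x) i = 0" unfolding coeff_pdx[OF assms(1)] by (simp add: DERIV_imp_deriv)
qed

lemma sm_const: "sm (\<lambda>y. p)"
  unfolding sm_def by auto

lemma pdx_const: "pdx (\<lambda>y. p) x = 0"
  by (rule poly_eqI) (simp add: coeff_pdx[OF sm_const] DERIV_imp_deriv)

lemma sm_add: "sm F \<Longrightarrow> sm G \<Longrightarrow> sm (\<lambda>y. F y + G y)"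
  unfolding sm_def by (auto intro!: differentiable_add) (meson degree_add_le max.cobounded1 max.cobounded2 order_trans)

lemma sm_diff: "sm F \<Longrightarrow> sm G \<Longrightarrow> sm (\<lambda>y. F y - G y)"
  unfolding sm_def by (auto intro!: differentiable_diff) (meson degree_diff_le max.cobounded1 max.cobounded2 order_trans)

lemma sm_smult: "(\<And>x. f differentiable (at x)) \<Longrightarrow> sm F \<Longrightarrow> sm (\<lambda>y. Polynomial.smult (f y) (F y))"
  unfolding sm_def by (auto intro!: differentiable_mult)

lemma sm_pCons0: "sm F \<Longrightarrow> sm (\<lambda>y. pCons 0 (F y))"
  unfolding sm_def
proof safe
  fix N assume "\<forall>y. degree (F y) \<le> N"
  then show "\<exists>N. \<forall>y. degree (pCons 0 (F y)) \<le> N"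
    by (intro exI[of _ "Suc N"]) (simp add: degree_pCons_le order_trans[OF degree_pCons_le])
next
  fix i x assume "\<forall>i x. (\<lambda>y. coeff (F y) i) differentiable at x"
  then show "(\<lambda>y. coeff (pCons 0 (F y)) i) differentiable at x"
    by (cases i) simp_all
qed

lemma sm_mult: "sm F \<Longrightarrow> sm G \<Longrightarrow> sm (\<lambda>y. F y * G y)"
  unfolding sm_def
proof safe
  fix N M assume "\<forall>y. degree (F y) \<le> N" "\<forall>y. degree (G y) \<le> M"
  then show "\<exists>K. \<forall>y. degree (F y * G y) \<le> K"
    by (intro exI[of _ "N + M"]) (meson add_mono degree_mult_le order_trans)
next
  fix i x assume "\<forall>i x. (\<lambda>y. coeff (F y) i) differentiable at x" "\<forall>i x. (\<lambda>y. coeff (G y) i) differentiable at x"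
  then show "(\<lambda>y. coeff (F y * G y) i) differentiable at x"
    unfolding coeff_mult by (intro differentiable_sum differentiable_mult) auto
qed

lemma pdx_mult:
  assumes F: "sm F" and G: "sm G"
  shows "pdx (\<lambda>y. F y * G y) x = pdx F x * G x + F x * pdx G x"
proof (rule poly_eqI)
  fix n
  have "((\<lambda>y. coeff (F y * G y) n) has_real_derivative
     (\<Sum>i\<le>n. coeff (pdx F x) i * coeff (G x) (n - i) + coeff (pdx G x) (n - i) * coeff (F x) i)) (at x)"
    unfolding coeff_mult
    by (intro DERIV_sum DERIV_mult sm_coeff_has_deriv F G)
  then have "coeff (pdx (\<lambda>y. F y * G y) x) n =
     (\<Sum>i\<le>n. coeff (pdx F x) i * coeff (G x) (n - i) + coeff (pdx G x) (n - i) * coeff (F x) i)"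
    unfolding coeff_pdx[OF sm_mult[OF F G]] by (rule DERIV_imp_deriv)
  then show "coeff (pdx (\<lambda>y. F y * G y) x) n = coeff (pdx F x * G x + F x * pdx G x) n"
    by (simp add: coeff_mult sum.distrib mult.commute[of "coeff (F x) _"])
qed

lemma pdx_mult_const:
  assumes F: "sm F"
  shows "pdx (\<lambda>y. F y * q) x = pdx F x * q"
  using pdx_mult[OF F sm_const] by (simp add: pdx_const)

lemma poly_pderiv_sum:
  fixes p :: "real poly"
  assumes "degree p \<le> N"
  shows "poly (pderiv p) t = (\<Sum>i\<le>N. coeff p i * (real i * t ^ (i - 1)))"
proof -
  have "((\<lambda>z. \<Sum>i\<le>N. coeff p i * z ^ i) has_real_derivative (\<Sum>i\<le>N. coeff p i * (real i * t ^ (i - 1)))) (at t)"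
    by (intro DERIV_sum DERIV_cmult) (simp add: DERIV_pow)
  moreover have "(\<lambda>z. \<Sum>i\<le>N. coeff p i * z ^ i) = poly p"
    using poly_sum_bound[OF assms] by auto
  ultimately show ?thesis using poly_DERIV[of p t] DERIV_unique by metis
qed

context wsp
begin

lemma L_deriv:
  assumes F: "sm F"
  shows "((\<lambda>y. L y (F y)) has_real_derivative
     (L x (pdx F x) - (\<Sum>k=1..m. bk k x * poly (F x) (tk k x)))) (at x)"
proof -
  obtain N where N: "\<forall>y. degree (F y) \<le> N" using F unfolding sm_def by blast
  have e: "(\<lambda>y. L y (F y)) = (\<lambda>y. \<Sum>i\<le>N. coeff (F y) i * mu y i)"
    using L_mom N by auto
  have "((\<lambda>y. \<Sum>i\<le>N. coeff (F y) i * mu y i) has_real_derivative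
     (\<Sum>i\<le>N. coeff (pdx F x) i * mu x i + (- (\<Sum>k=1..m. \<omega> k * exp (- (c k + x)\<^sup>2) * (c k + x) ^ i)) * coeff (F x) i)) (at x)"
    by (intro DERIV_sum DERIV_mult sm_coeff_has_deriv F moment_deriv)
  moreover have "(\<Sum>i\<le>N. coeff (pdx F x) i * mu x i + (- (\<Sum>k=1..m. \<omega> k * exp (- (c k + x)\<^sup>2) * (c k + x) ^ i)) * coeff (F x) i)
     = L x (pdx F x) - (\<Sum>k=1..m. bk k x * poly (F x) (tk k x))"
  proof -
    have "L x (pdx F x) = (\<Sum>i\<le>N. coeff (pdx F x) i * mu x i)"
      by (rule L_mom[OF degree_pdx[OF F N]])
    moreover have "(\<Sum>k=1..m. bk k x * poly (F x) (tk k x)) = (\<Sum>i\<le>N. coeff (F x) i * (\<Sum>k=1..m. \<omega> k * exp (- (c k + x)\<^sup>2) * (c k + x) ^ i))"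
      unfolding poly_sum_bound[OF N[rule_format]] bk_def tk_def
      by (simp add: sum_distrib_left sum_distrib_right algebra_simps) (rule sum.swap)
    ultimately show ?thesis by (simp add: sum.distrib sum_negf sum_subtractf mult.commute)
  qed
  ultimately show ?thesis unfolding e by simp
qed

lemma poly_eval_deriv:
  assumes F: "sm F"
  shows "((\<lambda>y. poly (F y) (c k + y)) has_real_derivative
     (poly (pdx F x) (tk k x) + poly (pderiv (F x)) (tk k x))) (at x)"
proof -
  obtain N where N: "\<forall>y. degree (F y) \<le> N" using F unfolding sm_def by blast
  have e: "(\<lambda>y. poly (F y) (c k + y)) = (\<lambda>y. \<Sum>i\<le>N. coeff (F y) i * (c k + y) ^ i)"
    using poly_sum_bound N by auto
  have dp: "((\<lambda>y. (c k + y) ^ i) has_real_derivative real i * (c k + x) ^ (i - 1)) (at x)" for i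
    using DERIV_chain2[OF DERIV_pow[of i "c k + x"] DERIV_add[OF DERIV_const DERIV_ident, of "c k" x]]
    by simp
  have "((\<lambda>y. \<Sum>i\<le>N. coeff (F y) i * (c k + y) ^ i) has_real_derivative
     (\<Sum>i\<le>N. coeff (pdx F x) i * (c k + x) ^ i + (real i * (c k + x) ^ (i - 1)) * coeff (F x) i)) (at x)"
    by (intro DERIV_sum DERIV_mult sm_coeff_has_deriv F dp)
  moreover have "(\<Sum>i\<le>N. coeff (pdx F x) i * (c k + x) ^ i + (real i * (c k + x) ^ (i - 1)) * coeff (F x) i)
      = poly (pdx F x) (tk k x) + poly (pderiv (F x)) (tk k x)"
    unfolding tk_def sum.distrib poly_sum_bound[OF degree_pdx[OF F N]] poly_pderiv_sum[OF N[rule_format]]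
    by (simp add: mult.commute)
  ultimately show ?thesis unfolding e by simp
qed

end


context wsp
begin

lemma sm_OPm_of: "(\<And>j. j < n \<Longrightarrow> sm (OP j)) \<Longrightarrow> sm (OPm n)"
proof -
  assume h: "\<And>j. j < n \<Longrightarrow> sm (OP j)"
  show "sm (OPm n)"
  proof (cases n)
    case 0
    then have "OPm n = (\<lambda>y. 0)" by (auto simp: OPm_def)
    then show ?thesis by (simp add: sm_const)
  next
    case (Suc j)
    then have "OPm n = OP j" by (auto simp: OPm_def)
    then show ?thesis using h Suc by simp
  qed
qed

lemma hn_has_deriv:
  assumes "sm (OP n)"
  shows "(hn n has_real_derivative (L x (pdx (\<lambda>y. OP n y * OP n y) x) - (\<Sum>k=1..m. bk k x * poly (OP n x * OP n x) (tk k x)))) (at x)"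
proof -
  have "hn n = (\<lambda>y. L y (OP n y * OP n y))" by (auto simp: hn_def)
  then show ?thesis using L_deriv[OF sm_mult[OF assms assms], of x] by simp
qed

lemma sm_OP: "sm (OP n)"
proof (induction n rule: less_induct)
  case (less n)
  show ?case
  proof (cases n)
    case 0
    then have "OP n = (\<lambda>y. 1)" by auto
    then show ?thesis by (simp add: sm_const)
  next
    case (Suc k)
    have sk: "sm (OP k)" using less Suc by simp
    have smk: "sm (OPm k)" by (rule sm_OPm_of) (use less Suc in simp)
    have hd: "\<And>j x. sm (OP j) \<Longrightarrow> hn j differentiable (at x)"
      using hn_has_deriv real_differentiable_def by blast
    have ad: "an k differentiable (at x)" for x
    proof -
      have "an k = (\<lambda>y. L y (pCons 0 (OP k y) * OP k y) / hn k y)" by (auto simp: an_def)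
      moreover have "(\<lambda>y. L y (pCons 0 (OP k y) * OP k y)) differentiable (at x)"
        using L_deriv[OF sm_mult[OF sm_pCons0[OF sk] sk], of x] real_differentiable_def by blast
      ultimately show ?thesis using hd[OF sk, of x] hn_pos[of k x] by (simp add: differentiable_divide)
    qed
    have bd: "bn k differentiable (at x)" for x
    proof (cases k)
      case 0
      then have "bn k = (\<lambda>y. 0)" by (auto simp: bn_def)
      then show ?thesis by simp
    next
      case (Suc j)
      then have "bn k = (\<lambda>y. hn k y / hn j y)" by (auto simp: bn_def)
      moreover have "sm (OP j)" using less \<open>n = Suc k\<close> Suc by simp
      ultimately show ?thesis using hd[OF sk, of x] hd[of j x] hn_pos[of j x] by (simp add: differentiable_divide)
    qed
    have "OP n = (\<lambda>y. pCons 0 (OP k y) - Polynomial.smult (an k y) (OP k y) - Polynomial.smult (bn k y) (OPm k y))"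
      using Suc by (auto simp: OP_rec)
    then show ?thesis
      by (simp only:) (intro sm_diff sm_pCons0 sm_smult sk smk ad bd)
  qed
qed

lemma dlt_pdx_OP: "dlt (pdx (OP n) x) n"
  unfolding dlt_def
proof (intro allI impI)
  fix i assume i: "n \<le> i"
  have "(\<lambda>y. coeff (OP n y) i) = (\<lambda>y. if i = n then 1 else 0)"
    using i by (auto simp: OP_lead OP_high)
  then show "coeff (pdx (OP n) x) i = 0" unfolding coeff_pdx[OF sm_OP] by (simp add: DERIV_imp_deriv)
qed

lemma dlt_pderiv: "dlt q n \<Longrightarrow> dlt (pderiv q) n"
  by (simp add: dlt_def coeff_pderiv)

lemma L_pdx_OP_q:
  assumes q: "dlt q n"
  shows "L x (pdx (OP n) x * q) = (\<Sum>k=1..m. bk k x * poly (OP n x) (tk k x) * poly q (tk k x))"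
proof -
  have F: "sm (\<lambda>y. OP n y * q)" by (intro sm_mult sm_OP sm_const)
  have "((\<lambda>y. L y (OP n y * q)) has_real_derivative (L x (pdx (\<lambda>y. OP n y * q) x) - (\<Sum>k=1..m. bk k x * poly (OP n x * q) (tk k x)))) (at x)"
    by (rule L_deriv[OF F])
  moreover have "(\<lambda>y. L y (OP n y * q)) = (\<lambda>y. 0)" using orth[OF q] by auto
  ultimately have "L x (pdx (\<lambda>y. OP n y * q) x) - (\<Sum>k=1..m. bk k x * poly (OP n x * q) (tk k x)) = 0"
    using DERIV_unique DERIV_const by metis
  then show ?thesis unfolding pdx_mult_const[OF sm_OP] by (simp add: mult.assoc)
qed

lemma pdx_OP:
  assumes n: "n \<ge> 1"
  shows "pdx (OP n) x + pderiv (OP n x) = Polynomial.smult (2 * bn n x) (OP (n - 1) x)"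
proof -
  let ?P = "OP n x" and ?Q = "OP (n - 1) x"
  define G where "G = pdx (OP n) x + pderiv ?P - Polynomial.smult (2 * bn n x) ?Q"
  have g1: "dlt (pdx (OP n) x) n" by (rule dlt_pdx_OP)
  have g2: "dlt (pderiv ?P) n" by (rule dlt_pderiv_OP)
  have g3: "dlt ?Q n" using n by (intro dlt_OP) simp
  have Gd: "dlt G n" unfolding G_def by (rule dlt_diff[OF dlt_add[OF g1 g2] dlt_smult[OF g3]])
  have key: "L x (G * q) = 0" if q: "dlt q n" for q
  proof -
    have a: "L x (pdx (OP n) x * q) = (\<Sum>k=1..m. bk k x * poly ?P (tk k x) * poly q (tk k x))"
      by (rule L_pdx_OP_q[OF q])
    have ib: "L x (pderiv (?P * q)) = 2 * L x (pCons 0 (?P * q)) - (\<Sum>k=1..m. bk k x * poly (?P * q) (c k + x))"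
      by (rule L_ibp)
    have b0: "L x (?P * pderiv q) = 0" by (rule orth[OF dlt_pderiv[OF q]])
    have b: "L x (pderiv ?P * q) = 2 * L x (?P * pCons 0 q) - (\<Sum>k=1..m. bk k x * poly ?P (tk k x) * poly q (tk k x))"
    proof -
      have "pderiv (?P * q) = ?P * pderiv q + pderiv ?P * q" by (simp only: pderiv_mult mult.commute[of q])
      then have "L x (pderiv (?P * q)) = L x (?P * pderiv q) + L x (pderiv ?P * q)" by (simp only: L_add)
      with ib b0 show ?thesis by (simp add: tk_def mult.assoc)
    qed
    define e where "e = coeff q (n - 1)"
    have c1: "L x (?P * pCons 0 q) = e * hn n x"
    proof -
      have d: "dlt (pCons 0 q) (Suc n)" by (rule dlt_pCons[OF q])
      have "coeff (pCons 0 q) n = e" using n by (cases n) (simp_all add: e_def)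
      with decomp[OF d, of x] have r: "dlt (pCons 0 q - Polynomial.smult e ?P) n" by simp
      have "?P * pCons 0 q = Polynomial.smult e (?P * ?P) + ?P * (pCons 0 q - Polynomial.smult e ?P)"
        by (simp add: right_diff_distrib)
      then have "L x (?P * pCons 0 q) = e * hn n x + L x (?P * (pCons 0 q - Polynomial.smult e ?P))"
        by (simp only: L_add L_smult hn_def)
      with orth[OF r] show ?thesis by simp
    qed
    have c2: "L x (?Q * q) = e * hn (n-1) x"
    proof -
      have d: "dlt q (Suc (n - 1))" using q n by simp
      from decomp[OF d, of x] have r: "dlt (q - Polynomial.smult e ?Q) (n - 1)" by (simp add: e_def)
      have "?Q * q = Polynomial.smult e (?Q * ?Q) + ?Q * (q - Polynomial.smult e ?Q)"
        by (simp add: right_diff_distrib)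
      then have "L x (?Q * q) = e * hn (n-1) x + L x (?Q * (q - Polynomial.smult e ?Q))"
        by (simp only: L_add L_smult hn_def)
      with orth[OF r] show ?thesis by simp
    qed
    have "L x (G * q) = L x (pdx (OP n) x * q) + L x (pderiv ?P * q) - 2 * bn n x * L x (?Q * q)"
      unfolding G_def by (simp add: ring_distribs L_add L_diff L_smult)
    also have "\<dots> = 2 * e * hn n x - 2 * bn n x * (e * hn (n-1) x)"
      using a b c1 c2 by simp
    also have "\<dots> = 0" using n hn_pos[of "n-1" x] by (simp add: bn_def)
    finally show ?thesis .
  qed
  have "G = 0"
  proof (rule ccontr)
    assume "G \<noteq> 0"
    with L_pos[of G x] key[OF Gd] show False by simp
  qed
  then show ?thesis unfolding G_def by (simp add: algebra_simps)
qed

lemma hn_deriv: "(hn n has_real_derivative (- 2 * an n x * hn n x)) (at x)"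
proof -
  have "L x (pdx (\<lambda>y. OP n y * OP n y) x) = 0"
  proof -
    have "L x (pdx (OP n) x * OP n x) = 0" using orth[OF dlt_pdx_OP[of n x], of x] by (simp add: L_comm)
    moreover have "L x (OP n x * pdx (OP n) x) = L x (pdx (OP n) x * OP n x)" by (rule L_comm)
    ultimately show ?thesis unfolding pdx_mult[OF sm_OP sm_OP] by (simp only: L_add)
  qed
  moreover have "(\<Sum>k=1..m. bk k x * poly (OP n x * OP n x) (tk k x)) = 2 * an n x * hn n x"
    using ibp_sq[of x n] by (simp add: power2_eq_square)
  ultimately show ?thesis using hn_has_deriv[OF sm_OP, of n x] by simp
qed

lemma OPt_deriv: "((\<lambda>y. poly (OP n y) (c k + y)) has_real_derivative (2 * bn n x * poly (OPm n x) (tk k x))) (at x)"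
proof (cases n)
  case 0
  then show ?thesis by (simp add: OPm_def bn_def)
next
  case (Suc j)
  have "poly (pdx (OP n) x) (tk k x) + poly (pderiv (OP n x)) (tk k x) = 2 * bn n x * poly (OPm n x) (tk k x)"
    using arg_cong[OF pdx_OP[of n x], of "\<lambda>p. poly p (tk k x)"] Suc by (simp add: OPm_def)
  then show ?thesis using poly_eval_deriv[OF sm_OP, of n k x] by simp
qed

lemma ppn_deriv:
  assumes n: "n \<ge> 1"
  shows "(ppn n has_real_derivative (2 * bn n x - real n)) (at x)"
proof -
  have e: "ppn n = (\<lambda>y. coeff (OP n y) (n - 1))" using n by (auto simp: ppn_def)
  have "coeff (pdx (OP n) x) (n - 1) = 2 * bn n x - real n"
  proof -
    have "coeff (pdx (OP n) x) (n-1) + coeff (pderiv (OP n x)) (n-1) = 2 * bn n x"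
      using arg_cong[OF pdx_OP[OF n, of x], of "\<lambda>p. coeff p (n-1)"] by (simp add: OP_lead)
    moreover have "coeff (pderiv (OP n x)) (n-1) = real n" using n by (simp add: coeff_pderiv OP_lead)
    ultimately show ?thesis by simp
  qed
  then show ?thesis unfolding e using sm_coeff_has_deriv[OF sm_OP, of n "n-1" x] by simp
qed

lemma bk_deriv: "(bk k has_real_derivative (- 2 * tk k x * bk k x)) (at x)"
proof -
  have "((\<lambda>y. \<omega> k * exp (- (c k + y)\<^sup>2)) has_real_derivative \<omega> k * (exp (- (c k + x)\<^sup>2) * (- (2 * (c k + x))))) (at x)"
    by (auto intro!: derivative_eq_intros)
  then show ?thesis unfolding bk_def[abs_def] tk_def by (simp add: algebra_simps)
qed

end


context wsp
begin

definition R :: "nat \<Rightarrow> nat \<Rightarrow> real \<Rightarrow> real" where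
  "R n k x = bk k x * (poly (OP n x) (tk k x))\<^sup>2 / hn n x"
definition rr :: "nat \<Rightarrow> nat \<Rightarrow> real \<Rightarrow> real" where
  "rr n k x = bk k x * poly (OP n x) (tk k x) * poly (OP (n-1) x) (tk k x) / hn (n-1) x"
definition rho :: "nat \<Rightarrow> nat \<Rightarrow> real \<Rightarrow> real" where
  "rho n k x = bk k x * (poly (OP (n-1) x) (tk k x))\<^sup>2 / hn (n-1) x"

lemma Rnk_R: "Rnk m c \<omega> n k = R n k"
  by (auto simp: Rnk_eq R_def tk_def)

lemma bn_hn: "n \<ge> 1 \<Longrightarrow> bn n x * hn (n-1) x = hn n x"
  using hn_pos[of "n-1" x] by (simp add: bn_def)

lemma bn_eq: "n \<ge> 1 \<Longrightarrow> bn n x = hn n x / hn (n-1) x"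
  by (simp add: bn_def)

lemma bn_pos: "n \<ge> 1 \<Longrightarrow> bn n x > 0"
  using hn_pos[of n x] hn_pos[of "n-1" x] by (simp add: bn_eq)

lemma OPt_deriv': "((\<lambda>y. poly (OP n y) (tk k y)) has_real_derivative (2 * bn n x * poly (OPm n x) (tk k x))) (at x)"
  using OPt_deriv unfolding tk_def by simp

lemma R_deriv:
  assumes n: "n \<ge> 1"
  shows "(R n k has_real_derivative (2 * (an n x - tk k x) * R n k x + 4 * rr n k x)) (at x)"
proof -
  let ?P = "\<lambda>y. poly (OP n y) (tk k y)"
  let ?D = "2 * bn n x * poly (OPm n x) (tk k x)"
  have Pm: "OPm n x = OP (n-1) x" using n by (simp add: OPm_def)
  have dP: "((\<lambda>y. ?P y * ?P y) has_real_derivative (?D * ?P x + ?D * ?P x)) (at x)"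
    by (rule DERIV_mult[OF OPt_deriv' OPt_deriv'])
  have dN: "((\<lambda>y. bk k y * (?P y * ?P y)) has_real_derivative
      ((- 2 * tk k x * bk k x) * (?P x * ?P x) + (?D * ?P x + ?D * ?P x) * bk k x)) (at x)"
    by (rule DERIV_mult[OF bk_deriv dP])
  have h: "hn n x > 0" "hn (n-1) x > 0" using hn_pos by auto
  have d: "((\<lambda>y. bk k y * (?P y * ?P y) / hn n y) has_real_derivative
     (((- 2 * tk k x * bk k x) * (?P x * ?P x) + (?D * ?P x + ?D * ?P x) * bk k x) * hn n x
      - (bk k x * (?P x * ?P x)) * (- 2 * an n x * hn n x)) / (hn n x * hn n x)) (at x)"
    by (rule DERIV_divide[OF dN hn_deriv]) (use h in simp)
  have "(((- 2 * tk k x * bk k x) * (?P x * ?P x) + (?D * ?P x + ?D * ?P x) * bk k x) * hn n x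
      - (bk k x * (?P x * ?P x)) * (- 2 * an n x * hn n x)) / (hn n x * hn n x)
      = 2 * (an n x - tk k x) * R n k x + 4 * rr n k x"
    unfolding R_def rr_def Pm using h bn_hn[OF n, of x]
    by (simp add: field_simps power2_eq_square)
  moreover have "R n k = (\<lambda>y. bk k y * (?P y * ?P y) / hn n y)"
    by (auto simp: R_def power2_eq_square)
  ultimately show ?thesis using d by simp
qed


lemma rr_deriv:
  assumes n: "n \<ge> 1"
  shows "(rr n k has_real_derivative (2 * bn n x * (rho n k x - R n k x))) (at x)"
proof -
  let ?P = "\<lambda>y. poly (OP n y) (tk k y)"
  let ?Q = "\<lambda>y. poly (OP (n-1) y) (tk k y)"
  let ?W = "bn (n-1) x * poly (OPm (n-1) x) (tk k x)"
  have Pm: "OPm n x = OP (n-1) x" using n by (simp add: OPm_def)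
  have dP: "(?P has_real_derivative (2 * bn n x * ?Q x)) (at x)"
    using OPt_deriv'[of n k x] Pm by simp
  have dQ: "(?Q has_real_derivative (2 * ?W)) (at x)"
    using OPt_deriv'[of "n-1" k x] by (simp add: mult.assoc)
  have W: "?W = tk k x * ?Q x - ?P x - an (n-1) x * ?Q x"
    using poly_rec[of "tk k x" "n-1" x] n by simp
  have dN: "((\<lambda>y. bk k y * ?P y * ?Q y) has_real_derivative
     ((- 2 * tk k x * bk k x) * ?P x + (2 * bn n x * ?Q x) * bk k x) * ?Q x + (2 * ?W) * (bk k x * ?P x)) (at x)"
    by (rule DERIV_mult[OF DERIV_mult[OF bk_deriv dP] dQ])
  have h: "hn n x > 0" "hn (n-1) x > 0" using hn_pos by auto
  have d: "((\<lambda>y. bk k y * ?P y * ?Q y / hn (n-1) y) has_real_derivative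
     ((((- 2 * tk k x * bk k x) * ?P x + (2 * bn n x * ?Q x) * bk k x) * ?Q x + (2 * ?W) * (bk k x * ?P x)) * hn (n-1) x
      - (bk k x * ?P x * ?Q x) * (- 2 * an (n-1) x * hn (n-1) x)) / (hn (n-1) x * hn (n-1) x)) (at x)"
    by (rule DERIV_divide[OF dN hn_deriv]) (use h in simp)
  have "((((- 2 * tk k x * bk k x) * ?P x + (2 * bn n x * ?Q x) * bk k x) * ?Q x + (2 * ?W) * (bk k x * ?P x)) * hn (n-1) x
      - (bk k x * ?P x * ?Q x) * (- 2 * an (n-1) x * hn (n-1) x)) / (hn (n-1) x * hn (n-1) x)
      = 2 * bn n x * (rho n k x - R n k x)"
    unfolding R_def rho_def W using h bn_hn[OF n, of x, symmetric] bn_pos[OF n, of x]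
    by (simp add: field_simps power2_eq_square)
  moreover have "rr n k = (\<lambda>y. bk k y * ?P y * ?Q y / hn (n-1) y)"
    by (auto simp: rr_def)
  ultimately show ?thesis using d by simp
qed

lemma sumR: "(\<Sum>k=1..m. R n k x) = 2 * an n x"
proof -
  have "(\<Sum>k=1..m. R n k x) = (\<Sum>k=1..m. bk k x * (poly (OP n x) (tk k x))\<^sup>2) / hn n x"
    unfolding R_def by (simp add: sum_divide_distrib)
  then show ?thesis using ibp_sq[of x n] hn_pos[of n x] by simp
qed

lemma sumr: "n \<ge> 1 \<Longrightarrow> (\<Sum>k=1..m. rr n k x) = 2 * bn n x - real n"
proof -
  assume n: "n \<ge> 1"
  have "(\<Sum>k=1..m. rr n k x) = (\<Sum>k=1..m. bk k x * poly (OP n x) (tk k x) * poly (OP (n-1) x) (tk k x)) / hn (n-1) x"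
    unfolding rr_def by (simp add: sum_divide_distrib)
  then show ?thesis using ibp_cross[OF n, of x] hn_pos[of "n-1" x] by (simp add: bn_eq[OF n] field_simps)
qed

lemma sumrho: "n \<ge> 1 \<Longrightarrow> (\<Sum>k=1..m. rho n k x) = 2 * an (n-1) x"
proof -
  assume n: "n \<ge> 1"
  have "(\<Sum>k=1..m. rho n k x) = (\<Sum>k=1..m. bk k x * (poly (OP (n-1) x) (tk k x))\<^sup>2) / hn (n-1) x"
    unfolding rho_def by (simp add: sum_divide_distrib)
  then show ?thesis using ibp_sq[of x "n-1"] hn_pos[of "n-1" x] by simp
qed

lemma sumtr: "n \<ge> 1 \<Longrightarrow> (\<Sum>k=1..m. tk k x * rr n k x) = ppn n x + 2 * bn n x * (an n x + an (n-1) x)"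
proof -
  assume n: "n \<ge> 1"
  have "(\<Sum>k=1..m. tk k x * rr n k x) = (\<Sum>k=1..m. bk k x * tk k x * poly (OP n x) (tk k x) * poly (OP (n-1) x) (tk k x)) / hn (n-1) x"
    unfolding rr_def by (simp add: sum_divide_distrib algebra_simps)
  then show ?thesis using ibp_tcross[OF n, of x] hn_pos[of "n-1" x] by (simp add: bn_eq[OF n] field_simps)
qed

lemma rr_sq: "n \<ge> 1 \<Longrightarrow> (rr n k x)\<^sup>2 = bn n x * R n k x * rho n k x"
proof -
  assume n: "n \<ge> 1"
  have h: "hn n x > 0" "hn (n-1) x > 0" using hn_pos by auto
  show ?thesis unfolding rr_def R_def rho_def using h bn_hn[OF n, of x, symmetric] bn_pos[OF n, of x]
    by (simp add: field_simps power2_eq_square)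
qed

lemma Dn_deriv: "((\<lambda>y. Dn m c \<omega> n y) has_real_derivative (2 * ppn n x * Dn m c \<omega> n x)) (at x)"
proof (induction n)
  case 0
  then show ?case by (simp add: Dn_prod ppn_def)
next
  case (Suc n)
  have e: "(\<lambda>y. Dn m c \<omega> (Suc n) y) = (\<lambda>y. Dn m c \<omega> n y * hn n y)" by (simp add: Dn_prod)
  have "((\<lambda>y. Dn m c \<omega> n y * hn n y) has_real_derivative
     (2 * ppn n x * Dn m c \<omega> n x) * hn n x + (- 2 * an n x * hn n x) * Dn m c \<omega> n x) (at x)"
    by (rule DERIV_mult[OF Suc hn_deriv])
  then show ?case unfolding e ppn_rec by (simp add: Dn_prod algebra_simps)
qed

lemma lnDn_deriv: "((\<lambda>y. ln (Dn m c \<omega> n y)) has_real_derivative (2 * ppn n x)) (at x)"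
proof -
  have "((\<lambda>y. ln (Dn m c \<omega> n y)) has_real_derivative (1 / Dn m c \<omega> n x * (2 * ppn n x * Dn m c \<omega> n x))) (at x)"
    by (rule DERIV_chain2[OF DERIV_ln_divide Dn_deriv]) (rule Dn_pos)
  then show ?thesis using Dn_pos[of n x] by simp
qed

end


lemma alg_sq:
  fixes a t Rk rk b rho :: real
  assumes "Rk \<noteq> 0" "rk\<^sup>2 = b * Rk * rho"
  shows "(2*(a-t)*Rk + 4*rk)\<^sup>2 / (2*Rk) = 2*(a-t)\<^sup>2*Rk + 8*(a-t)*rk + 8*b*rho"
proof -
  have "(2*(a-t)*Rk + 4*rk)\<^sup>2 = 4*(a-t)\<^sup>2*Rk*Rk + 16*(a-t)*Rk*rk + 16 * rk\<^sup>2"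
    by (simp add: power2_eq_square algebra_simps)
  also have "\<dots> = 2*Rk * (2*(a-t)\<^sup>2*Rk + 8*(a-t)*rk + 8*b*rho)"
    unfolding assms(2) by (simp add: algebra_simps)
  finally show ?thesis using assms(1) by simp
qed

lemma alg2:
  fixes a t Rk rk b rho T nn SRd :: real
  assumes "Rk \<noteq> 0" "rk\<^sup>2 = b * Rk * rho" "SRd = 4*a\<^sup>2 - 2*T + 4*(2*b - nn)"
  shows "(2 * (SRd/2 - 1) * Rk + (2*(a - t)*Rk + 4*rk) * (2*(a-t)) + 4*(2*b*(rho - Rk)))
     - (2*(a - t)*Rk + 4*rk)\<^sup>2/(2*Rk)
     = Rk * (3/2*(2*a)\<^sup>2 - 2*(t*(2*a) + T) + 2*(t\<^sup>2 - 2*nn - 1))"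
  unfolding alg_sq[OF assms(1,2)] assms(3) by (simp add: power2_eq_square field_simps)

context wsp
begin

definition Rd :: "nat \<Rightarrow> nat \<Rightarrow> real \<Rightarrow> real" where
  "Rd n j y = 2 * (an n y - tk j y) * R n j y + 4 * rr n j y"

lemma deriv_R:
  assumes n: "n \<ge> 1" shows "deriv (R n k) = Rd n k"
proof (rule ext)
  fix y show "deriv (R n k) y = Rd n k y"
    unfolding Rd_def by (rule DERIV_imp_deriv[OF R_deriv[OF n]])
qed

lemma sum_tkk: "(\<Sum>j=1..m. (c k + c j + 2 * x) * R n j x) = tk k x * (\<Sum>j=1..m. R n j x) + (\<Sum>j=1..m. tk j x * R n j x)"
proof -
  have "(\<Sum>j=1..m. (c k + c j + 2 * x) * R n j x) = (\<Sum>j=1..m. tk k x * R n j x + tk j x * R n j x)"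
    by (rule sum.cong) (simp_all add: tk_def algebra_simps)
  also have "\<dots> = tk k x * (\<Sum>j=1..m. R n j x) + (\<Sum>j=1..m. tk j x * R n j x)"
    by (simp add: sum.distrib sum_distrib_left)
  finally show ?thesis .
qed

lemma sumRd: "n \<ge> 1 \<Longrightarrow> (\<Sum>j=1..m. Rd n j x) = 4 * (an n x)\<^sup>2 - 2 * (\<Sum>j=1..m. tk j x * R n j x) + 4 * (2 * bn n x - real n)"
proof -
  assume n: "n \<ge> 1"
  have "(\<Sum>j=1..m. Rd n j x) = (\<Sum>j=1..m. (2 * an n x) * R n j x - 2 * (tk j x * R n j x) + 4 * rr n j x)"
    by (rule sum.cong) (simp_all add: Rd_def algebra_simps)
  also have "\<dots> = (2 * an n x) * (\<Sum>j=1..m. R n j x) - 2 * (\<Sum>j=1..m. tk j x * R n j x) + 4 * (\<Sum>j=1..m. rr n j x)"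
    by (simp only: sum.distrib sum_subtractf sum_distrib_left)
  finally have "(\<Sum>j=1..m. Rd n j x) = (2 * an n x) * (\<Sum>j=1..m. R n j x) - 2 * (\<Sum>j=1..m. tk j x * R n j x) + 4 * (\<Sum>j=1..m. rr n j x)" .
  then show ?thesis using sumR[of n x] sumr[OF n, of x] by (simp add: power2_eq_square)
qed

lemma part2:
  assumes n: "n \<ge> 1" and Rk: "R n k x \<noteq> 0"
  shows "\<exists>R2. (deriv (R n k) has_real_derivative R2) (at x) \<and>
           R2 - (deriv (R n k) x)\<^sup>2 / (2 * R n k x) =
           R n k x * (3/2 * (\<Sum>j=1..m. R n j x)\<^sup>2 - 2 * (\<Sum>j=1..m. (c k + c j + 2 * x) * R n j x)
              + 2 * ((c k + x)\<^sup>2 - 2 * real n - 1))"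
proof -
  have dR: "(R n j has_real_derivative Rd n j y) (at y)" for j y using R_deriv[OF n] by (simp add: Rd_def)
  have an_eq: "an n = (\<lambda>y. (\<Sum>j=1..m. R n j y) / 2)" using sumR by auto
  have dan: "(an n has_real_derivative (\<Sum>j=1..m. Rd n j x) / 2) (at x)"
    unfolding an_eq by (intro DERIV_cdivide DERIV_sum dR)
  have dt: "(tk k has_real_derivative 1) (at x)"
    unfolding tk_def[abs_def] using DERIV_add[OF DERIV_const DERIV_ident, of "c k" x] by simp
  have d1: "((\<lambda>y. 2 * (an n y - tk k y)) has_real_derivative 2 * ((\<Sum>j=1..m. Rd n j x) / 2 - 1)) (at x)"
    by (rule DERIV_cmult[OF DERIV_diff[OF dan dt]])
  have d2: "((\<lambda>y. 2 * (an n y - tk k y) * R n k y) has_real_derivative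
      2 * ((\<Sum>j=1..m. Rd n j x) / 2 - 1) * R n k x + Rd n k x * (2 * (an n x - tk k x))) (at x)"
    by (rule DERIV_mult[OF d1 dR])
  have d3: "((\<lambda>y. 4 * rr n k y) has_real_derivative 4 * (2 * bn n x * (rho n k x - R n k x))) (at x)"
    by (rule DERIV_cmult[OF rr_deriv[OF n]])
  define R2 where "R2 = 2 * ((\<Sum>j=1..m. Rd n j x) / 2 - 1) * R n k x + Rd n k x * (2 * (an n x - tk k x))
     + 4 * (2 * bn n x * (rho n k x - R n k x))"
  have fe: "Rd n k = (\<lambda>y. 2 * (an n y - tk k y) * R n k y + 4 * rr n k y)"
    by (rule ext) (simp add: Rd_def)
  have "((\<lambda>y. 2 * (an n y - tk k y) * R n k y + 4 * rr n k y) has_real_derivative R2) (at x)"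
    unfolding R2_def by (rule DERIV_add[OF d2 d3])
  then have dd: "(deriv (R n k) has_real_derivative R2) (at x)"
    unfolding deriv_R[OF n] fe .
  have "R2 - (deriv (R n k) x)\<^sup>2 / (2 * R n k x) =
     R n k x * (3/2*(2*an n x)\<^sup>2 - 2*(tk k x*(2*an n x) + (\<Sum>j=1..m. tk j x * R n j x)) + 2*((tk k x)\<^sup>2 - 2*real n - 1))"
    unfolding R2_def deriv_R[OF n] Rd_def[of n k x]
    by (rule alg2[OF Rk rr_sq[OF n] sumRd[OF n]])
  also have "\<dots> = R n k x * (3/2 * (\<Sum>j=1..m. R n j x)\<^sup>2 - 2 * (\<Sum>j=1..m. (c k + c j + 2 * x) * R n j x)
              + 2 * ((c k + x)\<^sup>2 - 2 * real n - 1))"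
    unfolding sum_tkk sumR by (simp add: tk_def)
  finally show ?thesis using dd by blast
qed

lemma integrand_eq:
  assumes n: "n \<ge> 1" and nz: "\<And>k. k \<in> {1..m} \<Longrightarrow> R n k y \<noteq> 0"
  shows "- (\<Sum>k=1..m. (deriv (R n k) y)\<^sup>2 / (2 * R n k y))
            + 1/2 * (\<Sum>k=1..m. R n k y) ^ 3
            + (\<Sum>k=1..m. 2 * (c k + y)\<^sup>2 * R n k y)
            - ((\<Sum>k=1..m. 2 * (c k + y) * R n k y) + 4 * real n)
                * (\<Sum>j=1..m. R n j y) = 8 * ppn n y"
proof -
  let ?a = "an n y" and ?b = "bn n y"
  have e1: "(\<Sum>k=1..m. (deriv (R n k) y)\<^sup>2 / (2 * R n k y)) =
     (\<Sum>k=1..m. 2 * ?a\<^sup>2 * R n k y + (-4 * ?a) * (tk k y * R n k y) + 2 * ((tk k y)\<^sup>2 * R n k y)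
        + 8 * ?a * rr n k y + (-8) * (tk k y * rr n k y) + 8 * ?b * rho n k y)"
  proof (rule sum.cong[OF refl])
    fix k assume k: "k \<in> {1..m}"
    have "(deriv (R n k) y)\<^sup>2 / (2 * R n k y) = 2*(?a - tk k y)\<^sup>2*R n k y + 8*(?a - tk k y)*rr n k y + 8*?b*rho n k y"
      unfolding deriv_R[OF n] Rd_def by (rule alg_sq[OF nz[OF k] rr_sq[OF n]])
    then show "(deriv (R n k) y)\<^sup>2 / (2 * R n k y) = 2 * ?a\<^sup>2 * R n k y + (-4 * ?a) * (tk k y * R n k y) + 2 * ((tk k y)\<^sup>2 * R n k y)
        + 8 * ?a * rr n k y + (-8) * (tk k y * rr n k y) + 8 * ?b * rho n k y"
      by (simp add: power2_eq_square algebra_simps)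
  qed
  have e2: "(\<Sum>k=1..m. 2 * ?a\<^sup>2 * R n k y + (-4 * ?a) * (tk k y * R n k y) + 2 * ((tk k y)\<^sup>2 * R n k y)
        + 8 * ?a * rr n k y + (-8) * (tk k y * rr n k y) + 8 * ?b * rho n k y)
     = 2 * ?a\<^sup>2 * (\<Sum>k=1..m. R n k y) + (-4 * ?a) * (\<Sum>k=1..m. tk k y * R n k y) + 2 * (\<Sum>k=1..m. (tk k y)\<^sup>2 * R n k y)
        + 8 * ?a * (\<Sum>k=1..m. rr n k y) + (-8) * (\<Sum>k=1..m. tk k y * rr n k y) + 8 * ?b * (\<Sum>k=1..m. rho n k y)"
    by (simp only: sum.distrib sum_distrib_left)
  have e3: "(\<Sum>k=1..m. 2 * (c k + y)\<^sup>2 * R n k y) = 2 * (\<Sum>k=1..m. (tk k y)\<^sup>2 * R n k y)"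
    by (simp add: tk_def sum_distrib_left mult.assoc)
  have e4: "(\<Sum>k=1..m. 2 * (c k + y) * R n k y) = 2 * (\<Sum>k=1..m. tk k y * R n k y)"
    unfolding sum_distrib_left tk_def by (rule sum.cong) simp_all
  show ?thesis
    unfolding e1 e2 e3 e4 sumR sumr[OF n] sumtr[OF n] sumrho[OF n]
    by (simp add: power2_eq_square power3_eq_cube algebra_simps)
qed

lemma Dhat_pos: "Dhat m c \<omega> n x > 0"
  unfolding Dhat_def using Dn_pos by simp

lemma lnDhat: "(\<lambda>z. ln (Dhat m c \<omega> n z)) = (\<lambda>z. real n * z\<^sup>2 + ln (Dn m c \<omega> n z))"
proof (rule ext)
  fix z
  have p: "Dn m c \<omega> n z > 0" by (rule Dn_pos)
  show "ln (Dhat m c \<omega> n z) = real n * z\<^sup>2 + ln (Dn m c \<omega> n z)"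
    unfolding Dhat_def using p by (simp add: ln_mult)
qed

lemma lnDhat_deriv: "((\<lambda>z. ln (Dhat m c \<omega> n z)) has_real_derivative (2 * real n * y + 2 * ppn n y)) (at y)"
proof -
  have "((\<lambda>z. real n * z\<^sup>2 + ln (Dn m c \<omega> n z)) has_real_derivative (real n * (2 * y) + 2 * ppn n y)) (at y)"
    by (intro DERIV_add DERIV_cmult lnDn_deriv) (auto intro!: derivative_eq_intros)
  then show ?thesis unfolding lnDhat by (simp add: algebra_simps)
qed

lemma part1:
  assumes n: "n \<ge> 1"
  shows "(\<forall>y. (\<lambda>z. ln (Dhat m c \<omega> n z)) differentiable (at y)) \<and>
        ((deriv (\<lambda>z. ln (Dhat m c \<omega> n z))) has_real_derivative
           4 * Dhat m c \<omega> (n+1) x * Dhat m c \<omega> (n-1) x / (Dhat m c \<omega> n x)\<^sup>2) (at x)"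
proof
  show "\<forall>y. (\<lambda>z. ln (Dhat m c \<omega> n z)) differentiable (at y)"
    using lnDhat_deriv real_differentiable_def by blast
  have dv: "deriv (\<lambda>z. ln (Dhat m c \<omega> n z)) = (\<lambda>y. 2 * real n * y + 2 * ppn n y)"
    by (rule ext, rule DERIV_imp_deriv, rule lnDhat_deriv)
  have "((\<lambda>y. 2 * real n * y + 2 * ppn n y) has_real_derivative (2 * real n * 1 + 2 * (2 * bn n x - real n))) (at x)"
    by (intro DERIV_add DERIV_cmult ppn_deriv[OF n] DERIV_ident)
  moreover have "4 * Dhat m c \<omega> (n+1) x * Dhat m c \<omega> (n-1) x / (Dhat m c \<omega> n x)\<^sup>2 = 4 * bn n x"
  proof -
    have D1: "Dn m c \<omega> (n+1) x = Dn m c \<omega> n x * hn n x" by (simp add: Dn_prod)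
    have D2: "Dn m c \<omega> n x = Dn m c \<omega> (n-1) x * hn (n-1) x"
      using n Dn_prod[of n x] Dn_prod[of "n-1" x] by (metis Suc_diff_1 le_numeral_extra(2) less_le_trans prod.lessThan_Suc zero_less_one not_less)
    have ex: "exp (real (n+1) * x\<^sup>2) * exp (real (n-1) * x\<^sup>2) = (exp (real n * x\<^sup>2))\<^sup>2"
      using n by (simp add: exp_add[symmetric] power2_eq_square of_nat_diff algebra_simps)
    have p: "Dn m c \<omega> (n-1) x > 0" "hn (n-1) x > 0" "hn n x > 0" using Dn_pos hn_pos by auto
    show ?thesis unfolding Dhat_def D1 D2 bn_eq[OF n]
      using p ex by (simp add: field_simps power2_eq_square)
  qed
  ultimately show "((deriv (\<lambda>z. ln (Dhat m c \<omega> n z))) has_real_derivative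
           4 * Dhat m c \<omega> (n+1) x * Dhat m c \<omega> (n-1) x / (Dhat m c \<omega> n x)\<^sup>2) (at x)"
    unfolding dv by simp
qed

end


lemma einterval_min_max: "y \<in> einterval (min 0 (ereal x)) (max 0 (ereal x)) \<Longrightarrow> y \<in> {min 0 x..max 0 x}"
proof -
  assume y: "y \<in> einterval (min 0 (ereal x)) (max 0 (ereal x))"
  show ?thesis
  proof (cases "0 \<le> x")
    case True
    then have "min 0 (ereal x) = 0" "max 0 (ereal x) = ereal x" by (simp_all add: min_def max_def)
    with y True show ?thesis by (auto simp: einterval_iff)
  next
    case False
    then have "min 0 (ereal x) = ereal x" "max 0 (ereal x) = 0" by (simp_all add: min_def max_def)
    with y False show ?thesis by (auto simp: einterval_iff)
  qed
qed

context wsp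
begin

lemma part3:
  assumes n: "n \<ge> 1" and nz: "\<forall>k\<in>{1..m}. \<forall>y\<in>{min 0 x..max 0 x}. R n k y \<noteq> 0"
  shows "Dhat m c \<omega> n x / Dhat m c \<omega> n 0 =
        exp (real n * x\<^sup>2) * exp (1/4 * (LBINT y=0..x.
            - (\<Sum>k=1..m. (deriv (R n k) y)\<^sup>2 / (2 * R n k y))
            + 1/2 * (\<Sum>k=1..m. R n k y) ^ 3
            + (\<Sum>k=1..m. 2 * (c k + y)\<^sup>2 * R n k y)
            - ((\<Sum>k=1..m. 2 * (c k + y) * R n k y) + 4 * real n)
                * (\<Sum>j=1..m. R n j y)))"
proof -
  have I1: "(LBINT y=0..x.
            - (\<Sum>k=1..m. (deriv (R n k) y)\<^sup>2 / (2 * R n k y))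
            + 1/2 * (\<Sum>k=1..m. R n k y) ^ 3
            + (\<Sum>k=1..m. 2 * (c k + y)\<^sup>2 * R n k y)
            - ((\<Sum>k=1..m. 2 * (c k + y) * R n k y) + 4 * real n)
                * (\<Sum>j=1..m. R n j y)) = (LBINT y=0..x. 8 * ppn n y)"
  proof (rule interval_integral_cong)
    fix y assume "y \<in> einterval (min 0 (ereal x)) (max 0 (ereal x))"
    then have y: "y \<in> {min 0 x..max 0 x}" by (rule einterval_min_max)
    show "- (\<Sum>k=1..m. (deriv (R n k) y)\<^sup>2 / (2 * R n k y))
            + 1/2 * (\<Sum>k=1..m. R n k y) ^ 3
            + (\<Sum>k=1..m. 2 * (c k + y)\<^sup>2 * R n k y)
            - ((\<Sum>k=1..m. 2 * (c k + y) * R n k y) + 4 * real n)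
                * (\<Sum>j=1..m. R n j y) = 8 * ppn n y"
      by (rule integrand_eq[OF n]) (use nz y in blast)
  qed
  have dppn: "((\<lambda>y. 8 * ppn n y) has_real_derivative 8 * (2 * bn n y - real n)) (at y)" for y
    by (rule DERIV_cmult[OF ppn_deriv[OF n]])
  have cont: "continuous_on {min 0 x..max 0 x} (\<lambda>y. 8 * ppn n y)"
    by (rule continuous_at_imp_continuous_on) (use dppn DERIV_isCont in blast)
  have dF: "((\<lambda>y. 4 * ln (Dn m c \<omega> n y)) has_vector_derivative 8 * ppn n y) (at y within {min 0 x..max 0 x})" for y
  proof -
    have "((\<lambda>y. 4 * ln (Dn m c \<omega> n y)) has_real_derivative 4 * (2 * ppn n y)) (at y)"
      by (rule DERIV_cmult[OF lnDn_deriv])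
    then have "((\<lambda>y. 4 * ln (Dn m c \<omega> n y)) has_real_derivative 8 * ppn n y) (at y)" by simp
    then show ?thesis
      by (simp add: has_real_derivative_iff_has_vector_derivative has_vector_derivative_at_within)
  qed
  have "(LBINT y=ereal 0..ereal x. 8 * ppn n y) = 4 * ln (Dn m c \<omega> n x) - 4 * ln (Dn m c \<omega> n 0)"
    by (rule interval_integral_FTC_finite[OF cont dF])
  then have I2: "(LBINT y=0..x. 8 * ppn n y) = 4 * ln (Dn m c \<omega> n x) - 4 * ln (Dn m c \<omega> n 0)"
    by (simp add: zero_ereal_def)
  have p: "Dn m c \<omega> n x > 0" "Dn m c \<omega> n 0 > 0" by (rule Dn_pos)+
  have "1/4 * (4 * ln (Dn m c \<omega> n x) - 4 * ln (Dn m c \<omega> n 0)) = ln (Dn m c \<omega> n x) - ln (Dn m c \<omega> n 0)"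
    by simp
  then have "exp (1/4 * (4 * ln (Dn m c \<omega> n x) - 4 * ln (Dn m c \<omega> n 0))) = Dn m c \<omega> n x / Dn m c \<omega> n 0"
    using p by (simp only: exp_diff exp_ln)
  then show ?thesis unfolding I1 I2 by (simp add: Dhat_def)
qed

end

theorem theorem5p1:
  fixes m n :: nat and c \<omega> :: "nat \<Rightarrow> real"
  assumes "m \<ge> 1" and "c 1 = 0"
    and "\<And>i j. 1 \<le> i \<Longrightarrow> i < j \<Longrightarrow> j \<le> m \<Longrightarrow> c i < c j"
    and "\<And>l. l \<le> m \<Longrightarrow> (\<Sum>k=0..l. \<omega> k) \<ge> 0"
    and "\<And>x. \<exists>s. weight m c \<omega> x s \<noteq> 0"
    and "n \<ge> 1"
  shows
   "(\<forall>x. (\<forall>y. (\<lambda>z. ln (Dhat m c \<omega> n z)) differentiable (at y)) \<and>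
        ((deriv (\<lambda>z. ln (Dhat m c \<omega> n z))) has_real_derivative
           4 * Dhat m c \<omega> (n+1) x * Dhat m c \<omega> (n-1) x / (Dhat m c \<omega> n x)\<^sup>2) (at x))
    \<and> (\<forall>k\<in>{1..m}. \<forall>x. Rnk m c \<omega> n k x \<noteq> 0 \<longrightarrow>
        (\<forall>y. Rnk m c \<omega> n k differentiable (at y)) \<and>
        (\<exists>R2. (deriv (Rnk m c \<omega> n k) has_real_derivative R2) (at x) \<and>
           R2 - (deriv (Rnk m c \<omega> n k) x)\<^sup>2 / (2 * Rnk m c \<omega> n k x) =
           Rnk m c \<omega> n k x *
             (3/2 * (\<Sum>j=1..m. Rnk m c \<omega> n j x)\<^sup>2
              - 2 * (\<Sum>j=1..m. (c k + c j + 2 * x) * Rnk m c \<omega> n j x)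
              + 2 * ((c k + x)\<^sup>2 - 2 * real n - 1))))
    \<and> (\<forall>x. (\<forall>k\<in>{1..m}. \<forall>y\<in>{min 0 x..max 0 x}. Rnk m c \<omega> n k y \<noteq> 0) \<longrightarrow>
        Dhat m c \<omega> n x / Dhat m c \<omega> n 0 =
        exp (real n * x\<^sup>2) * exp (1/4 * (LBINT y=0..x.
            - (\<Sum>k=1..m. (deriv (Rnk m c \<omega> n k) y)\<^sup>2 / (2 * Rnk m c \<omega> n k y))
            + 1/2 * (\<Sum>k=1..m. Rnk m c \<omega> n k y) ^ 3
            + (\<Sum>k=1..m. 2 * (c k + y)\<^sup>2 * Rnk m c \<omega> n k y)
            - ((\<Sum>k=1..m. 2 * (c k + y) * Rnk m c \<omega> n k y) + 4 * real n)
                * (\<Sum>j=1..m. Rnk m c \<omega> n j y))))"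
proof -
  interpret wsp m c \<omega>
    by unfold_locales (use assms in auto)
  have n: "n \<ge> 1" by (rule assms(6))
  have A: "\<forall>x. (\<forall>y. (\<lambda>z. ln (Dhat m c \<omega> n z)) differentiable (at y)) \<and>
        ((deriv (\<lambda>z. ln (Dhat m c \<omega> n z))) has_real_derivative
           4 * Dhat m c \<omega> (n+1) x * Dhat m c \<omega> (n-1) x / (Dhat m c \<omega> n x)\<^sup>2) (at x)"
    using part1[OF n] by blast
  have B: "\<forall>k\<in>{1..m}. \<forall>x. R n k x \<noteq> 0 \<longrightarrow>
        (\<forall>y. R n k differentiable (at y)) \<and>
        (\<exists>R2. (deriv (R n k) has_real_derivative R2) (at x) \<and>
           R2 - (deriv (R n k) x)\<^sup>2 / (2 * R n k x) =
           R n k x *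
             (3/2 * (\<Sum>j=1..m. R n j x)\<^sup>2
              - 2 * (\<Sum>j=1..m. (c k + c j + 2 * x) * R n j x)
              + 2 * ((c k + x)\<^sup>2 - 2 * real n - 1)))"
  proof (intro ballI allI impI conjI)
    fix k x y
    show "R n k differentiable (at y)" using R_deriv[OF n] real_differentiable_def by blast
  next
    fix k x assume "R n k x \<noteq> 0"
    then show "\<exists>R2. (deriv (R n k) has_real_derivative R2) (at x) \<and>
           R2 - (deriv (R n k) x)\<^sup>2 / (2 * R n k x) =
           R n k x *
             (3/2 * (\<Sum>j=1..m. R n j x)\<^sup>2
              - 2 * (\<Sum>j=1..m. (c k + c j + 2 * x) * R n j x)
              + 2 * ((c k + x)\<^sup>2 - 2 * real n - 1))"
      by (rule part2[OF n])
  qed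
  have C: "\<forall>x. (\<forall>k\<in>{1..m}. \<forall>y\<in>{min 0 x..max 0 x}. R n k y \<noteq> 0) \<longrightarrow>
        Dhat m c \<omega> n x / Dhat m c \<omega> n 0 =
        exp (real n * x\<^sup>2) * exp (1/4 * (LBINT y=0..x.
            - (\<Sum>k=1..m. (deriv (R n k) y)\<^sup>2 / (2 * R n k y))
            + 1/2 * (\<Sum>k=1..m. R n k y) ^ 3
            + (\<Sum>k=1..m. 2 * (c k + y)\<^sup>2 * R n k y)
            - ((\<Sum>k=1..m. 2 * (c k + y) * R n k y) + 4 * real n)
                * (\<Sum>j=1..m. R n j y)))"
    using part3[OF n] by blast
  show ?thesis unfolding Rnk_R using A B C by blast
qed


end
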